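(* Let $H\in M_{M\times N}(\mathbb T)$ be a partial Hadamard matrix with rows $R_1,\ldots,R_M$ such that the projections $P_{ij}=\mathrm{Proj}(R_i/R_j)$ pairwise commute. Let $\mathcal A\subset M_N(\mathbb C)$ be the unital algebra generated by the $P_{ij}$, and write $\mathcal A=C(S)$ with $S\subset\widetilde S_M$, where each character $\chi$ of $\mathcal A$ corresponds to the partial permutation $\sigma$ with $\sigma(j)=i\iff\chi(P_{ij})=1$. Then the quantum semigroup $G$ associated to $H$ is the subsemigroup $\langle S\rangle\subset\widetilde S_M$ generated by $S$, i.e. the bialgebra image of $\pi_H$ is $C(\langle S\rangle)$, with $u_{ij}$ mapped to the function $\sigma\mapsto1$ if $\sigma(j)=i$ and $0$ otherwise.
   Context: A partial Hadamard matrix is $H\in M_{M\times N}(\mathbb T)$ with pairwise orthogonal rows; $R_i/R_j$ is entrywise division; $\mathrm{Proj}(\xi)$ is the orthogonal projection onto $\mathbb C\xi$. $\widetilde S_M$ is the semigroup of partial permutations (bijections $X\to Y$, $X,Y\subset\{1,\ldots,M\}$) with product $(\sigma\tau)(j)=\sigma(\tau(j))$ when defined. $\widetilde{\mathcal A}_s(M)$ is the unital $*$-algebra generated by the entries $u_{ij}$ of the universal $M\times M$ submagic matrix (entries are projections, pairwise orthogonal on rows and on columns), with comultiplication $\Delta(u_{ij})=\sum_k u_{ik}\otimes u_{kj}$; $\pi_H:\widetilde{\mathcal A}_s(M)\to M_N(\mathbb C)$ is given by $u_{ij}\mapsto P_{ij}$. The bialgebra image of $\pi_H$ (whose algebra is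 written $C(G)$) is the minimal factorization $\pi_H=\rho\circ q$ with $q$ a surjective comultiplication-preserving unital $*$-homomorphism onto a unital $*$-algebra with comultiplication, minimal in the sense that every other such factorization maps uniquely onto it compatibly with the quotient maps. $C(\langle S\rangle)$ carries the comultiplication $\Delta(f)(\sigma,\tau)=f(\sigma\tau)$. *)

theory Defs
  imports Complex_Main "Jordan_Normal_Form.Matrix"
begin

definition partial_hadamard :: "nat \<Rightarrow> nat \<Rightarrow> (nat \<Rightarrow> nat \<Rightarrow> complex) \<Rightarrow> bool" where
  "partial_hadamard M N H \<longleftrightarrow>
     (\<forall>i<M. \<forall>a<N. cmod (H i a) = 1) \<and>
     (\<forall>i<M. \<forall>k<M. i \<noteq> k \<longrightarrow> (\<Sum>a<N. H i a * cnj (H k a)) = 0)"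

definition Proj :: "nat \<Rightarrow> (nat \<Rightarrow> complex) \<Rightarrow> complex mat" where
  "Proj N xi = mat N N (\<lambda>(a, b). xi a * cnj (xi b) / (\<Sum>c<N. complex_of_real ((cmod (xi c))\<^sup>2)))"

definition Pmat :: "nat \<Rightarrow> (nat \<Rightarrow> nat \<Rightarrow> complex) \<Rightarrow> nat \<Rightarrow> nat \<Rightarrow> complex mat" where
  "Pmat N H i j = Proj N (\<lambda>a. H i a / H j a)"

inductive_set gen_alg :: "nat \<Rightarrow> complex mat set \<Rightarrow> complex mat set"
  for N :: nat and G :: "complex mat set" where
  one: "1\<^sub>m N \<in> gen_alg N G"
| gen: "x \<in> G \<Longrightarrow> x \<in> gen_alg N G"
| add: "x \<in> gen_alg N G \<Longrightarrow> y \<in> gen_alg N G \<Longrightarrow> x + y \<in> gen_alg N G"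
| smult: "x \<in> gen_alg N G \<Longrightarrow> c \<cdot>\<^sub>m x \<in> gen_alg N G"
| mult: "x \<in> gen_alg N G \<Longrightarrow> y \<in> gen_alg N G \<Longrightarrow> x * y \<in> gen_alg N G"

definition P_algebra :: "nat \<Rightarrow> nat \<Rightarrow> (nat \<Rightarrow> nat \<Rightarrow> complex) \<Rightarrow> complex mat set" where
  "P_algebra M N H = gen_alg N {Pmat N H i j | i j. i < M \<and> j < M}"

definition character :: "nat \<Rightarrow> complex mat set \<Rightarrow> (complex mat \<Rightarrow> complex) \<Rightarrow> bool" where
  "character N A \<chi> \<longleftrightarrow>
     \<chi> (1\<^sub>m N) = 1 \<and>
     (\<forall>x\<in>A. \<forall>y\<in>A. \<chi> (x + y) = \<chi> x + \<chi> y) \<and>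
     (\<forall>x\<in>A. \<forall>c. \<chi> (c \<cdot>\<^sub>m x) = c * \<chi> x) \<and>
     (\<forall>x\<in>A. \<forall>y\<in>A. \<chi> (x * y) = \<chi> x * \<chi> y)"

text \<open>Partial permutations of {0..<M} are modelled as partial maps nat \<rightharpoonup> nat with
  domain and range inside {..<M}; the product is composition (sigma tau)(j) = sigma(tau(j)).\<close>
definition char_pperms :: "nat \<Rightarrow> nat \<Rightarrow> (nat \<Rightarrow> nat \<Rightarrow> complex) \<Rightarrow> (nat \<Rightarrow> nat option) set" where
  "char_pperms M N H =
     {\<sigma>. dom \<sigma> \<subseteq> {..<M} \<and> ran \<sigma> \<subseteq> {..<M} \<and>
          (\<exists>\<chi>. character N (P_algebra M N H) \<chi> \<and>
               (\<forall>i<M. \<forall>j<M. \<sigma> j = Some i \<longleftrightarrow> \<chi> (Pmat N H i j) = 1))}"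

inductive_set gen_semigroup :: "(nat \<Rightarrow> nat option) set \<Rightarrow> (nat \<Rightarrow> nat option) set"
  for S where
  base: "\<sigma> \<in> S \<Longrightarrow> \<sigma> \<in> gen_semigroup S"
| comp: "\<sigma> \<in> gen_semigroup S \<Longrightarrow> \<tau> \<in> gen_semigroup S \<Longrightarrow> (\<sigma> \<circ>\<^sub>m \<tau>) \<in> gen_semigroup S"

text \<open>Elements of the free algebra on generators u_ij (i,j < M) are finitely supported
  coefficient functions on words; a word [(i1,j1),...,(in,jn)] stands for u_{i1 j1}...u_{in jn}.\<close>
type_synonym word = "(nat \<times> nat) list"
type_synonym felem = "word \<Rightarrow> complex"

definition free_alg :: "nat \<Rightarrow> felem set" where
  "free_alg M = {f. finite {w. f w \<noteq> 0} \<and> (\<forall>w. f w \<noteq> 0 \<longrightarrow> set w \<subseteq> {..<M} \<times> {..<M})}"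

definition fmul :: "felem \<Rightarrow> felem \<Rightarrow> felem" where
  "fmul f g = (\<lambda>w. \<Sum>k\<le>length w. f (take k w) * g (drop k w))"

definition fone :: felem where
  "fone = (\<lambda>w. if w = [] then 1 else 0)"

definition fgen :: "nat \<Rightarrow> nat \<Rightarrow> felem" where
  "fgen i j = (\<lambda>w. if w = [(i, j)] then 1 else 0)"

definition fadd :: "felem \<Rightarrow> felem \<Rightarrow> felem" where
  "fadd f g = (\<lambda>w. f w + g w)"

definition fscale :: "complex \<Rightarrow> felem \<Rightarrow> felem" where
  "fscale c f = (\<lambda>w. c * f w)"

text \<open>Involution: generators are self-adjoint (u_ij = u_ij^* since they are projections).\<close>
definition fstar :: "felem \<Rightarrow> felem" where
  "fstar f = (\<lambda>w. cnj (f (rev w)))"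

text \<open>Defining relations of the universal submagic matrix: u_ij^2 = u_ij (projections; self-adjointness
  is built into the involution), and orthogonality along rows and along columns.\<close>
definition submagic_rels :: "nat \<Rightarrow> felem set" where
  "submagic_rels M =
     {fadd (fmul (fgen i j) (fgen i j)) (fscale (-1) (fgen i j)) | i j. i < M \<and> j < M} \<union>
     {fmul (fgen i j) (fgen i k) | i j k. i < M \<and> j < M \<and> k < M \<and> j \<noteq> k} \<union>
     {fmul (fgen i j) (fgen k j) | i j k. i < M \<and> j < M \<and> k < M \<and> i \<noteq> k}"

text \<open>Elements of the algebraic tensor square are finitely supported functions on pairs of words.\<close>
type_synonym telem = "word \<times> word \<Rightarrow> complex"

definition ftensor :: "felem \<Rightarrow> felem \<Rightarrow> telem" where
  "ftensor f g = (\<lambda>(u, v). f u * g v)"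

text \<open>Comultiplication on words: Delta(u_{i1 j1}...u_{in jn}) =
  sum over k1..kn < M of u_{i1 k1}...u_{in kn} (x) u_{k1 j1}...u_{kn jn}.\<close>
definition fcomul :: "nat \<Rightarrow> felem \<Rightarrow> telem" where
  "fcomul M f = (\<lambda>(u, v).
     if length u = length v \<and> map snd u = map fst v \<and> (\<forall>x\<in>set u. snd x < M)
     then f (zip (map fst u) (map snd v)) else 0)"

inductive_set cspan :: "telem set \<Rightarrow> telem set" for X where
  zero: "(\<lambda>_. 0) \<in> cspan X"
| base: "x \<in> X \<Longrightarrow> x \<in> cspan X"
| add: "x \<in> cspan X \<Longrightarrow> y \<in> cspan X \<Longrightarrow> (\<lambda>p. x p + y p) \<in> cspan X"
| scale: "x \<in> cspan X \<Longrightarrow> (\<lambda>p. c * x p) \<in> cspan X"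

fun Pword :: "nat \<Rightarrow> (nat \<Rightarrow> nat \<Rightarrow> complex) \<Rightarrow> word \<Rightarrow> complex mat" where
  "Pword N H [] = 1\<^sub>m N"
| "Pword N H ((i, j) # w) = Pmat N H i j * Pword N H w"

text \<open>pi_H on the free algebra (u_ij \<mapsto> P_ij); it factors through the universal submagic algebra.\<close>
definition piH :: "nat \<Rightarrow> (nat \<Rightarrow> nat \<Rightarrow> complex) \<Rightarrow> felem \<Rightarrow> complex mat" where
  "piH N H f = mat N N (\<lambda>(a, b). \<Sum>w\<in>{w. f w \<noteq> 0}. f w * (Pword N H w $$ (a, b)))"

text \<open>A surjective comultiplication-preserving unital *-homomorphism q from the universal
  submagic algebra A = F/R (F free, R generated by the submagic relations) onto some unital
  *-algebra with comultiplication, through which pi_H factors, is determined up to isomorphism by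
  its kernel; lifted to F, this kernel is an ideal I with: R \<subseteq> I, I a two-sided *-ideal of F,
  I \<subseteq> ker pi_H, and Delta(I) \<subseteq> I(x)F + F(x)I (= kernel of F(x)F \<rightarrow> B(x)B), which is exactly the
  condition for the comultiplication of A to descend to B = F/I.  A factorization maps
  (uniquely) onto another one compatibly with the quotient maps iff its kernel is contained in
  the other's kernel.\<close>
definition factorization_ideal :: "nat \<Rightarrow> nat \<Rightarrow> (nat \<Rightarrow> nat \<Rightarrow> complex) \<Rightarrow> felem set \<Rightarrow> bool" where
  "factorization_ideal M N H I \<longleftrightarrow>
     I \<subseteq> free_alg M \<and>
     submagic_rels M \<subseteq> I \<and>
     (\<forall>f\<in>I. \<forall>g\<in>I. fadd f g \<in> I) \<and>
     (\<forall>f\<in>I. \<forall>c. fscale c f \<in> I) \<and>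
     (\<forall>f\<in>I. \<forall>g\<in>free_alg M. fmul f g \<in> I \<and> fmul g f \<in> I) \<and>
     (\<forall>f\<in>I. fstar f \<in> I) \<and>
     (\<forall>f\<in>I. piH N H f = 0\<^sub>m N N) \<and>
     (\<forall>f\<in>I. fcomul M f \<in>
        cspan ({ftensor a b | a b. a \<in> I \<and> b \<in> free_alg M} \<union>
               {ftensor a b | a b. a \<in> free_alg M \<and> b \<in> I}))"

definition ev_word :: "(nat \<Rightarrow> nat option) \<Rightarrow> word \<Rightarrow> complex" where
  "ev_word \<sigma> w = (if (\<forall>(i, j)\<in>set w. \<sigma> j = Some i) then 1 else 0)"

text \<open>The map q : F \<rightarrow> C(G) for a set G of partial permutations, u_ij \<mapsto> (sigma \<mapsto> [sigma(j)=i]);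
  functions in C(G) are represented as functions vanishing outside G.\<close>
definition qmap :: "(nat \<Rightarrow> nat option) set \<Rightarrow> felem \<Rightarrow> (nat \<Rightarrow> nat option) \<Rightarrow> complex" where
  "qmap G f = (\<lambda>\<sigma>. if \<sigma> \<in> G then (\<Sum>w\<in>{w. f w \<noteq> 0}. f w * ev_word \<sigma> w) else 0)"

definition qqmap :: "(nat \<Rightarrow> nat option) set \<Rightarrow> telem \<Rightarrow> (nat \<Rightarrow> nat option) \<Rightarrow> (nat \<Rightarrow> nat option) \<Rightarrow> complex" where
  "qqmap G t \<sigma> \<tau> = (if \<sigma> \<in> G \<and> \<tau> \<in> G
      then (\<Sum>p\<in>{p. t p \<noteq> 0}. t p * ev_word \<sigma> (fst p) * ev_word \<tau> (snd p)) else 0)"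

text \<open>(C(G), q) is the bialgebra image of pi_H: q is a unital *-homomorphism from the
  universal submagic algebra (it kills the relations), onto C(G), comultiplication-preserving for
  Delta(f)(sigma,tau) = f(sigma tau), pi_H factors through it, and it is minimal: the kernel of
  every other factorization is contained in its kernel.\<close>
definition is_bialgebra_image :: "nat \<Rightarrow> nat \<Rightarrow> (nat \<Rightarrow> nat \<Rightarrow> complex) \<Rightarrow> (nat \<Rightarrow> nat option) set \<Rightarrow> bool" where
  "is_bialgebra_image M N H G \<longleftrightarrow>
     (\<forall>\<sigma>\<in>G. \<forall>\<tau>\<in>G. (\<sigma> \<circ>\<^sub>m \<tau>) \<in> G) \<and>
     qmap G fone = (\<lambda>\<sigma>. if \<sigma> \<in> G then 1 else 0) \<and>
     (\<forall>f\<in>free_alg M. \<forall>g\<in>free_alg M. qmap G (fadd f g) = (\<lambda>\<sigma>. qmap G f \<sigma> + qmap G g \<sigma>)) \<and>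
     (\<forall>f\<in>free_alg M. \<forall>c. qmap G (fscale c f) = (\<lambda>\<sigma>. c * qmap G f \<sigma>)) \<and>
     (\<forall>f\<in>free_alg M. \<forall>g\<in>free_alg M. qmap G (fmul f g) = (\<lambda>\<sigma>. qmap G f \<sigma> * qmap G g \<sigma>)) \<and>
     (\<forall>f\<in>free_alg M. qmap G (fstar f) = (\<lambda>\<sigma>. cnj (qmap G f \<sigma>))) \<and>
     (\<forall>r\<in>submagic_rels M. qmap G r = (\<lambda>_. 0)) \<and>
     (\<forall>g. (\<forall>\<sigma>. \<sigma> \<notin> G \<longrightarrow> g \<sigma> = 0) \<longrightarrow> (\<exists>f\<in>free_alg M. qmap G f = g)) \<and>
     (\<forall>f\<in>free_alg M. \<forall>\<sigma>\<in>G. \<forall>\<tau>\<in>G. qqmap G (fcomul M f) \<sigma> \<tau> = qmap G f (\<sigma> \<circ>\<^sub>m \<tau>)) \<and>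
     (\<forall>f\<in>free_alg M. qmap G f = (\<lambda>_. 0) \<longrightarrow> piH N H f = 0\<^sub>m N N) \<and>
     (\<forall>I. factorization_ideal M N H I \<longrightarrow> (\<forall>f\<in>I. qmap G f = (\<lambda>_. 0)))"

end

theory Submission
  imports Defs
begin

definition fs :: "('a \<Rightarrow> complex) \<Rightarrow> bool" where "fs f \<longleftrightarrow> finite {x. f x \<noteq> 0}"
definition EvG :: "('a \<Rightarrow> complex) \<Rightarrow> ('a \<Rightarrow> complex) \<Rightarrow> complex" where
  "EvG \<phi> f = (\<Sum>x\<in>{x. f x \<noteq> 0}. f x * \<phi> x)"

lemma EvG_sup: assumes "fs f" "finite A" "{x. f x \<noteq> 0} \<subseteq> A"
  shows "EvG \<phi> f = (\<Sum>x\<in>A. f x * \<phi> x)"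
  unfolding EvG_def using assms by (intro sum.mono_neutral_left) (auto simp: fs_def)

lemma fs_add: "fs f \<Longrightarrow> fs g \<Longrightarrow> fs (\<lambda>x. f x + g x)"
  unfolding fs_def by (rule finite_subset[of _ "{x. f x \<noteq> 0} \<union> {x. g x \<noteq> 0}"]) auto
lemma fs_scale: "fs f \<Longrightarrow> fs (\<lambda>x. c * f x)"
  unfolding fs_def by (rule finite_subset[of _ "{x. f x \<noteq> 0}"]) auto

lemma EvG_add: assumes "fs f" "fs g" shows "EvG \<phi> (\<lambda>x. f x + g x) = EvG \<phi> f + EvG \<phi> g"
proof -
  let ?A = "{x. f x \<noteq> 0} \<union> {x. g x \<noteq> 0}"
  have fA: "finite ?A" using assms by (auto simp: fs_def)
  have "EvG \<phi> (\<lambda>x. f x + g x) = (\<Sum>x\<in>?A. (f x + g x) * \<phi> x)"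
    by (rule EvG_sup[OF fs_add[OF assms] fA]) auto
  also have "\<dots> = (\<Sum>x\<in>?A. f x * \<phi> x) + (\<Sum>x\<in>?A. g x * \<phi> x)"
    by (simp add: distrib_right sum.distrib)
  also have "\<dots> = EvG \<phi> f + EvG \<phi> g"
    using EvG_sup[OF assms(1) fA, of \<phi>] EvG_sup[OF assms(2) fA, of \<phi>] by auto
  finally show ?thesis .
qed

lemma EvG_scale: assumes "fs f" shows "EvG \<phi> (\<lambda>x. c * f x) = c * EvG \<phi> f"
proof -
  let ?A = "{x. f x \<noteq> 0}"
  have fA: "finite ?A" using assms by (auto simp: fs_def)
  have "EvG \<phi> (\<lambda>x. c * f x) = (\<Sum>x\<in>?A. (c * f x) * \<phi> x)"
    by (rule EvG_sup[OF fs_scale[OF assms] fA]) auto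
  also have "\<dots> = c * EvG \<phi> f" unfolding EvG_def by (simp add: sum_distrib_left mult.assoc)
  finally show ?thesis .
qed

lemma fs_fmul: assumes "fs f" "fs g" shows "fs (fmul f g)"
proof -
  let ?A = "(\<lambda>(u,v). u @ v) ` ({x. f x \<noteq> 0} \<times> {x. g x \<noteq> 0})"
  have "{w. fmul f g w \<noteq> 0} \<subseteq> ?A"
  proof
    fix w assume "w \<in> {w. fmul f g w \<noteq> 0}"
    then have "(\<Sum>k\<le>length w. f (take k w) * g (drop k w)) \<noteq> 0" by (simp add: fmul_def)
    then obtain k where "f (take k w) * g (drop k w) \<noteq> 0"
      by (meson sum.not_neutral_contains_not_neutral)
    then have "(take k w, drop k w) \<in> {x. f x \<noteq> 0} \<times> {x. g x \<noteq> 0}" by auto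
    moreover have "w = (\<lambda>(u,v). u @ v) (take k w, drop k w)" by simp
    ultimately show "w \<in> ?A" by (rule rev_image_eqI)
  qed
  moreover have "finite ?A" using assms unfolding fs_def by simp
  ultimately show ?thesis unfolding fs_def by (rule finite_subset)
qed

lemma EvG_mul: assumes "fs f" "fs g" and phi: "\<And>u v. \<phi> (u @ v) = \<phi> u * \<phi> v"
  shows "EvG \<phi> (fmul f g) = EvG \<phi> f * EvG \<phi> g"
proof -
  let ?Sf = "{x. f x \<noteq> 0}" and ?Sg = "{x. g x \<noteq> 0}"
  let ?A = "(\<lambda>(u,v). u @ v) ` (?Sf \<times> ?Sg)"
  have fin: "finite ?Sf" "finite ?Sg" using assms by (auto simp: fs_def)
  have fA: "finite ?A" using fin by auto
  have sub: "{w. fmul f g w \<noteq> 0} \<subseteq> ?A"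
  proof
    fix w assume "w \<in> {w. fmul f g w \<noteq> 0}"
    then have "(\<Sum>k\<le>length w. f (take k w) * g (drop k w)) \<noteq> 0" by (simp add: fmul_def)
    then obtain k where "f (take k w) * g (drop k w) \<noteq> 0"
      by (meson sum.not_neutral_contains_not_neutral)
    then have "(take k w, drop k w) \<in> {x. f x \<noteq> 0} \<times> {x. g x \<noteq> 0}" by auto
    moreover have "w = (\<lambda>(u,v). u @ v) (take k w, drop k w)" by simp
    ultimately show "w \<in> ?A" by (rule rev_image_eqI)
  qed
  define h where "h = (\<lambda>(w::word,k). f (take k w) * g (drop k w) * \<phi> w)"
  let ?Sig = "Sigma ?A (\<lambda>w. {..length w})"
  let ?B = "(\<lambda>(u,v). (u @ v, length u)) ` (?Sf \<times> ?Sg)"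
  have "EvG \<phi> (fmul f g) = (\<Sum>w\<in>?A. fmul f g w * \<phi> w)"
    by (rule EvG_sup[OF fs_fmul[OF assms(1,2)] fA sub])
  also have "\<dots> = (\<Sum>w\<in>?A. \<Sum>k\<in>{..length w}. h (w,k))"
    unfolding fmul_def h_def by (simp add: sum_distrib_right)
  also have "\<dots> = (\<Sum>p\<in>?Sig. h p)" using sum.Sigma[OF fA, of "\<lambda>w. {..length w}" "\<lambda>w k. h (w,k)"] by simp
  also have "\<dots> = (\<Sum>p\<in>?B. h p)"
  proof (rule sum.mono_neutral_right)
    show "finite ?Sig" using fA by (intro finite_SigmaI) simp_all
    show "?B \<subseteq> ?Sig"
    proof
      fix p assume "p \<in> ?B"
      then obtain q where q: "q \<in> ?Sf \<times> ?Sg" "p = (\<lambda>(u,v). (u @ v, length u)) q" by (rule imageE)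
      obtain u v where "q = (u,v)" by (cases q)
      then have uv: "u \<in> ?Sf" "v \<in> ?Sg" "p = (u @ v, length u)" using q by simp_all
      have "u @ v \<in> ?A" using uv(1,2) by (intro rev_image_eqI[of "(u,v)"]) simp_all
      moreover have "length u \<in> {..length (u @ v)}" by simp
      ultimately show "p \<in> ?Sig" unfolding uv(3) by (rule SigmaI)
    qed
    show "\<forall>p\<in>?Sig - ?B. h p = 0"
    proof
      fix p assume p: "p \<in> ?Sig - ?B"
      obtain w k where pw: "p = (w,k)" by (cases p)
      have "(w,k) \<in> ?Sig" using DiffD1[OF p] pw by simp
      then have kw: "k \<le> length w" by (rule SigmaE2) simp
      show "h p = 0"
      proof (rule ccontr)
        assume "h p \<noteq> 0"
        then have "f (take k w) \<noteq> 0" "g (drop k w) \<noteq> 0" using pw h_def by auto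
        then have 1: "(take k w, drop k w) \<in> ?Sf \<times> ?Sg" by simp
        have 2: "p = (\<lambda>(u,v). (u @ v, length u)) (take k w, drop k w)"
          using kw pw by simp
        have "p \<in> ?B" by (rule image_eqI[of p "\<lambda>(u,v). (u @ v, length u)" "(take k w, drop k w)", OF 2 1])
        then show False by (rule DiffD2[OF p])
      qed
    qed
  qed
  also have "\<dots> = (\<Sum>q\<in>?Sf \<times> ?Sg. h ((\<lambda>(u,v). (u @ v, length u)) q))"
    by (subst sum.reindex) (auto simp: inj_on_def)
  also have "\<dots> = (\<Sum>q\<in>?Sf \<times> ?Sg. (f (fst q) * \<phi> (fst q)) * (g (snd q) * \<phi> (snd q)))"
    by (rule sum.cong) (auto simp: h_def phi)
  also have "\<dots> = EvG \<phi> f * EvG \<phi> g"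
    unfolding EvG_def sum_product by (simp add: sum.cartesian_product case_prod_beta)
  finally show ?thesis .
qed


lemma ev_nil[simp]: "ev_word \<sigma> [] = 1" by (simp add: ev_word_def)
lemma ev_cons: "ev_word \<sigma> ((i,j) # w) = (if \<sigma> j = Some i then 1 else 0) * ev_word \<sigma> w"
  by (simp add: ev_word_def)
lemma ev_append: "ev_word \<sigma> (u @ v) = ev_word \<sigma> u * ev_word \<sigma> v"
  by (auto simp: ev_word_def)
lemma ev_rev: "ev_word \<sigma> (rev w) = ev_word \<sigma> w"
  by (simp add: ev_word_def)
lemma ev_cnj: "cnj (ev_word \<sigma> w) = ev_word \<sigma> w"
  by (simp add: ev_word_def)
lemma ev_single: "ev_word \<sigma> [(i,j)] = (if \<sigma> j = Some i then 1 else 0)"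
  by (simp add: ev_word_def)

lemma ev_single': "ev_word \<sigma> [p] = (if \<sigma> (snd p) = Some (fst p) then 1 else 0)"
  by (simp add: ev_word_def case_prod_beta)

lemma qmap_EvG: "qmap G f \<sigma> = (if \<sigma> \<in> G then EvG (ev_word \<sigma>) f else 0)"
  by (simp add: qmap_def EvG_def)

lemma qqmap_EvG: "qqmap G t \<sigma> \<tau> = (if \<sigma> \<in> G \<and> \<tau> \<in> G
   then EvG (\<lambda>p. ev_word \<sigma> (fst p) * ev_word \<tau> (snd p)) t else 0)"
  by (simp add: qqmap_def EvG_def mult.assoc)

lemma free_alg_fs: "f \<in> free_alg M \<Longrightarrow> fs f" by (simp add: free_alg_def fs_def)

lemma supp_fone: "{w. fone w \<noteq> 0} = {[]}" by (auto simp: fone_def)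
lemma supp_fgen: "{w. fgen i j w \<noteq> 0} = {[(i,j)]}" by (auto simp: fgen_def)
lemma fs_fone: "fs fone" by (simp add: fs_def supp_fone)
lemma fs_fgen: "fs (fgen i j)" by (simp add: fs_def supp_fgen)
lemma EvG_fone: "EvG \<phi> fone = \<phi> []" by (simp add: EvG_def supp_fone fone_def)
lemma EvG_fgen: "EvG \<phi> (fgen i j) = \<phi> [(i,j)]" by (simp add: EvG_def supp_fgen fgen_def)

lemma fone_free: "fone \<in> free_alg M" by (auto simp: free_alg_def fone_def)
lemma fgen_free: "i < M \<Longrightarrow> j < M \<Longrightarrow> fgen i j \<in> free_alg M" by (auto simp: free_alg_def fgen_def)
lemma fadd_free: assumes "f \<in> free_alg M" "g \<in> free_alg M" shows "fadd f g \<in> free_alg M"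
proof -
  have "fs (fadd f g)" using fs_add[OF free_alg_fs[OF assms(1)] free_alg_fs[OF assms(2)]] by (simp add: fadd_def)
  moreover have "set w \<subseteq> {..<M} \<times> {..<M}" if "fadd f g w \<noteq> 0" for w
  proof -
    have "f w \<noteq> 0 \<or> g w \<noteq> 0" using that by (auto simp: fadd_def)
    then show ?thesis using assms unfolding free_alg_def by blast
  qed
  ultimately show ?thesis unfolding free_alg_def fs_def by blast
qed
lemma fscale_free: "f \<in> free_alg M \<Longrightarrow> fscale c f \<in> free_alg M"
  unfolding free_alg_def fscale_def using fs_scale[of f c] by (auto simp: fs_def)
lemma fmul_free: assumes "f \<in> free_alg M" "g \<in> free_alg M" shows "fmul f g \<in> free_alg M"
proof -
  have "fs (fmul f g)" using fs_fmul[OF free_alg_fs[OF assms(1)] free_alg_fs[OF assms(2)]] .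
  moreover have "set w \<subseteq> {..<M} \<times> {..<M}" if "fmul f g w \<noteq> 0" for w
  proof -
    have "(\<Sum>k\<le>length w. f (take k w) * g (drop k w)) \<noteq> 0" using that by (simp add: fmul_def)
    then obtain k where "f (take k w) * g (drop k w) \<noteq> 0"
      by (meson sum.not_neutral_contains_not_neutral)
    then have "set (take k w) \<subseteq> {..<M} \<times> {..<M}" "set (drop k w) \<subseteq> {..<M} \<times> {..<M}"
      using assms unfolding free_alg_def by auto
    then show ?thesis by (metis append_take_drop_id set_append Un_subset_iff)
  qed
  ultimately show ?thesis unfolding free_alg_def fs_def by blast
qed

lemma fs_fadd: "fs f \<Longrightarrow> fs g \<Longrightarrow> fs (fadd f g)" unfolding fadd_def by (rule fs_add)
lemma fs_fscale: "fs f \<Longrightarrow> fs (fscale c f)" unfolding fscale_def by (rule fs_scale)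
lemma EvG_fadd: "fs f \<Longrightarrow> fs g \<Longrightarrow> EvG \<phi> (fadd f g) = EvG \<phi> f + EvG \<phi> g"
  unfolding fadd_def by (rule EvG_add)
lemma EvG_fscale: "fs f \<Longrightarrow> EvG \<phi> (fscale c f) = c * EvG \<phi> f"
  unfolding fscale_def by (rule EvG_scale)

lemma EvG_fstar: assumes "fs f" and phi: "\<And>w. \<phi> (rev w) = \<phi> w" "\<And>w. cnj (\<phi> w) = \<phi> w"
  shows "EvG \<phi> (fstar f) = cnj (EvG \<phi> f)"
proof -
  let ?Sf = "{x. f x \<noteq> 0}"
  have supp: "{w. fstar f w \<noteq> 0} = rev ` ?Sf"
  proof
    show "{w. fstar f w \<noteq> 0} \<subseteq> rev ` ?Sf"
    proof
      fix w assume "w \<in> {w. fstar f w \<noteq> 0}"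
      then have "rev w \<in> ?Sf" by (simp add: fstar_def)
      moreover have "w = rev (rev w)" by simp
      ultimately show "w \<in> rev ` ?Sf" by (rule rev_image_eqI)
    qed
    show "rev ` ?Sf \<subseteq> {w. fstar f w \<noteq> 0}" by (auto simp: fstar_def)
  qed
  have "EvG \<phi> (fstar f) = (\<Sum>w\<in>rev ` ?Sf. fstar f w * \<phi> w)" unfolding EvG_def supp ..
  also have "\<dots> = (\<Sum>w\<in>?Sf. fstar f (rev w) * \<phi> (rev w))"
    by (subst sum.reindex) (auto simp: inj_on_def)
  also have "\<dots> = (\<Sum>w\<in>?Sf. cnj (f w * \<phi> w))"
    by (rule sum.cong) (simp_all add: fstar_def phi)
  also have "\<dots> = cnj (EvG \<phi> f)" by (simp add: EvG_def)
  finally show ?thesis .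
qed

definition good :: "nat \<Rightarrow> (nat \<Rightarrow> nat option) \<Rightarrow> bool" where
  "good M \<sigma> \<longleftrightarrow> (\<forall>j i. \<sigma> j = Some i \<longrightarrow> j < M \<and> i < M) \<and>
     (\<forall>j k i. \<sigma> j = Some i \<and> \<sigma> k = Some i \<longrightarrow> j = k)"

lemma good_comp: "good M \<sigma> \<Longrightarrow> good M \<tau> \<Longrightarrow> good M (\<sigma> \<circ>\<^sub>m \<tau>)"
  unfolding good_def map_comp_Some_iff by metis

lemma gen_good: assumes "\<forall>\<sigma>\<in>S. good M \<sigma>" "\<sigma> \<in> gen_semigroup S" shows "good M \<sigma>"
  using assms(2) by induction (use assms(1) good_comp in auto)

lemma good_dom: "good M \<sigma> \<Longrightarrow> dom \<sigma> \<subseteq> {..<M} \<and> ran \<sigma> \<subseteq> {..<M}"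
  unfolding good_def dom_def ran_def by blast

lemma finite_good: "finite {\<sigma>. good M \<sigma>}"
proof -
  have "{\<sigma>. good M \<sigma>} \<subseteq> (\<Union>A\<in>Pow {..<M}. {m. dom m = A \<and> ran m \<subseteq> {..<M}})"
  proof
    fix \<sigma> assume "\<sigma> \<in> {\<sigma>. good M \<sigma>}"
    then have "dom \<sigma> \<subseteq> {..<M}" "ran \<sigma> \<subseteq> {..<M}" using good_dom by auto
    then show "\<sigma> \<in> (\<Union>A\<in>Pow {..<M}. {m. dom m = A \<and> ran m \<subseteq> {..<M}})" by blast
  qed
  moreover have "finite (\<Union>A\<in>Pow {..<M}. {m. dom m = A \<and> ran m \<subseteq> {..<M}})"
  proof (rule finite_UN_I)
    show "finite (Pow {..<M::nat})" by simp
    fix A assume "A \<in> Pow {..<M::nat}"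
    then have "finite A" by (meson PowD finite_lessThan finite_subset)
    then show "finite {m. dom m = A \<and> ran m \<subseteq> {..<M}}" by (rule finite_set_of_finite_maps) simp
  qed
  ultimately show ?thesis by (rule finite_subset)
qed


definition KS :: "nat \<Rightarrow> nat \<Rightarrow> nat list set" where
  "KS M n = {ks. length ks = n \<and> set ks \<subseteq> {..<M}}"

lemma KS_0: "KS M 0 = {[]}" by (auto simp: KS_def)
lemma KS_Suc: "KS M (Suc n) = (\<lambda>(k,ks). k # ks) ` ({..<M} \<times> KS M n)"
proof
  show "KS M (Suc n) \<subseteq> (\<lambda>(k,ks). k # ks) ` ({..<M} \<times> KS M n)"
  proof
    fix xs assume "xs \<in> KS M (Suc n)"
    then obtain y ys where xs: "xs = y # ys" "length ys = n" "set xs \<subseteq> {..<M}"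
      unfolding KS_def by (auto simp: length_Suc_conv)
    then have "(y, ys) \<in> {..<M} \<times> KS M n" by (auto simp: KS_def)
    moreover have "xs = (\<lambda>(k,ks). k # ks) (y, ys)" using xs by simp
    ultimately show "xs \<in> (\<lambda>(k,ks). k # ks) ` ({..<M} \<times> KS M n)" by (rule rev_image_eqI)
  qed
  show "(\<lambda>(k,ks). k # ks) ` ({..<M} \<times> KS M n) \<subseteq> KS M (Suc n)"
    by (auto simp: KS_def)
qed
lemma finite_KS: "finite (KS M n)"
  by (induction n) (simp_all add: KS_0 KS_Suc)

lemma inner_sum: assumes ran: "\<And>j k. \<tau> j = Some k \<Longrightarrow> k < M"
  shows "(\<Sum>ks\<in>KS M (length w). ev_word \<sigma> (zip (map fst w) ks) * ev_word \<tau> (zip ks (map snd w)))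
         = ev_word (\<sigma> \<circ>\<^sub>m \<tau>) w"
proof (induction w)
  case Nil
  then show ?case by (simp add: KS_0)
next
  case (Cons x w)
  obtain i j where x: "x = (i,j)" by (cases x)
  let ?a = "\<lambda>k. (if \<sigma> k = Some i then 1 else 0) * (if \<tau> j = Some k then 1 else (0::complex))"
  let ?b = "\<lambda>ks. ev_word \<sigma> (zip (map fst w) ks) * ev_word \<tau> (zip ks (map snd w))"
  have "(\<Sum>ks\<in>KS M (length (x # w)). ev_word \<sigma> (zip (map fst (x # w)) ks) * ev_word \<tau> (zip ks (map snd (x # w))))
      = (\<Sum>q\<in>{..<M} \<times> KS M (length w). ev_word \<sigma> (zip (map fst (x # w)) (fst q # snd q)) * ev_word \<tau> (zip (fst q # snd q) (map snd (x # w))))"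
    by (simp add: KS_Suc sum.reindex inj_on_def case_prod_beta)
  also have "\<dots> = (\<Sum>q\<in>{..<M} \<times> KS M (length w). ?a (fst q) * ?b (snd q))"
    by (rule sum.cong) (simp_all add: x ev_cons)
  also have "\<dots> = (\<Sum>k<M. ?a k) * (\<Sum>ks\<in>KS M (length w). ?b ks)"
    by (simp add: sum_product sum.cartesian_product case_prod_beta)
  also have "(\<Sum>ks\<in>KS M (length w). ?b ks) = ev_word (\<sigma> \<circ>\<^sub>m \<tau>) w" by (rule Cons.IH)
  also have "(\<Sum>k<M. ?a k) = (if (\<sigma> \<circ>\<^sub>m \<tau>) j = Some i then 1 else 0)"
  proof (cases "\<tau> j")
    case None
    then show ?thesis by (simp add: map_comp_def)
  next
    case (Some k0)
    then have "k0 < M" using ran by blast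
    have "(\<Sum>k<M. ?a k) = (\<Sum>k<M. if k = k0 then (if \<sigma> k = Some i then 1 else 0) else 0)"
      by (rule sum.cong) (auto simp: Some)
    also have "\<dots> = (if \<sigma> k0 = Some i then 1 else 0)" using \<open>k0 < M\<close> by (simp add: sum.delta)
    finally show ?thesis by (simp add: map_comp_def Some)
  qed
  finally show ?case by (simp add: x ev_cons)
qed

lemma comul_EvG: assumes "fs f" and ran: "\<And>j k. \<tau> j = Some k \<Longrightarrow> k < M"
  shows "fs (fcomul M f)"
    and "EvG (\<lambda>p. ev_word \<sigma> (fst p) * ev_word \<tau> (snd p)) (fcomul M f) = EvG (ev_word (\<sigma> \<circ>\<^sub>m \<tau>)) f"
proof -
  let ?Sf = "{x. f x \<noteq> 0}"
  define gm where "gm = (\<lambda>(w::word, ks::nat list). (zip (map fst w) ks, zip ks (map snd w)))"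
  define D where "D = Sigma ?Sf (\<lambda>w. KS M (length w))"
  have finD: "finite D" unfolding D_def using assms(1) by (intro finite_SigmaI) (simp_all add: fs_def finite_KS)
  have val: "fcomul M f (gm p) = f (fst p)" if "p \<in> D" for p
  proof -
    obtain w ks where p: "p = (w,ks)" by (cases p)
    have ks: "length ks = length w" "set ks \<subseteq> {..<M}" using that unfolding p D_def KS_def by auto
    have "\<forall>x\<in>set (zip (map fst w) ks). snd x < M"
    proof
      fix x assume "x \<in> set (zip (map fst w) ks)"
      then have "snd x \<in> set ks" by (metis prod.collapse set_zip_rightD)
      then show "snd x < M" using ks by auto
    qed
    then show ?thesis unfolding p gm_def fcomul_def using ks by (simp add: zip_map_fst_snd)
  qed
  have supp: "{p. fcomul M f p \<noteq> 0} = gm ` D"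
  proof
    show "{p. fcomul M f p \<noteq> 0} \<subseteq> gm ` D"
    proof
      fix p assume "p \<in> {p. fcomul M f p \<noteq> 0}"
      then have nz: "fcomul M f p \<noteq> 0" by simp
      obtain u v where p: "p = (u,v)" by (cases p)
      have c: "length u = length v" "map snd u = map fst v" "\<forall>x\<in>set u. snd x < M"
        and fz: "f (zip (map fst u) (map snd v)) \<noteq> 0"
        using nz unfolding p fcomul_def by (simp_all split: if_splits)
      define w where "w = zip (map fst u) (map snd v)"
      define ks where "ks = map snd u"
      have lw: "length w = length u" using c by (simp add: w_def)
      have sk: "set ks \<subseteq> {..<M}" using c(3) unfolding ks_def by auto
      have "(w, ks) \<in> D" unfolding D_def KS_def using fz sk lw by (simp add: w_def ks_def)
      moreover have "p = gm (w, ks)"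
      proof -
        have "map fst w = map fst u" "map snd w = map snd v" using c by (simp_all add: w_def)
        then show ?thesis unfolding gm_def p ks_def using c by (metis zip_map_fst_snd case_prod_conv)
      qed
      ultimately show "p \<in> gm ` D" by (rule rev_image_eqI)
    qed
    show "gm ` D \<subseteq> {p. fcomul M f p \<noteq> 0}"
    proof
      fix p assume "p \<in> gm ` D"
      then obtain q where q: "q \<in> D" "p = gm q" by (rule imageE)
      have "fst q \<in> ?Sf" using q(1) unfolding D_def by (auto simp: mem_Sigma_iff)
      then show "p \<in> {p. fcomul M f p \<noteq> 0}" using val[OF q(1)] q(2) by simp
    qed
  qed
  have inj: "inj_on gm D"
  proof (rule inj_onI)
    fix p q assume pq: "p \<in> D" "q \<in> D" "gm p = gm q"
    obtain w ks where p: "p = (w,ks)" by (cases p)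
    obtain w' ks' where q: "q = (w',ks')" by (cases q)
    have l: "length ks = length w" "length ks' = length w'" using pq(1,2) unfolding p q D_def KS_def by auto
    have e1: "zip (map fst w) ks = zip (map fst w') ks'" and e2: "zip ks (map snd w) = zip ks' (map snd w')"
      using pq(3) unfolding p q gm_def by simp_all
    have "map snd (zip (map fst w) ks) = map snd (zip (map fst w') ks')" using e1 by simp
    then have kk: "ks = ks'" using l by simp
    have "map fst (zip (map fst w) ks) = map fst (zip (map fst w') ks')" using e1 by simp
    then have f1: "map fst w = map fst w'" using l by simp
    have "map snd (zip ks (map snd w)) = map snd (zip ks' (map snd w'))" using e2 by simp
    then have f2: "map snd w = map snd w'" using l by simp
    have "w = w'" by (metis f1 f2 zip_map_fst_snd)
    then show "p = q" using p q kk by simp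
  qed
  show "fs (fcomul M f)" unfolding fs_def supp using finD by simp
  let ?\<Phi> = "\<lambda>p. ev_word \<sigma> (fst p) * ev_word \<tau> (snd p)"
  have "EvG ?\<Phi> (fcomul M f) = (\<Sum>p\<in>gm ` D. fcomul M f p * ?\<Phi> p)" unfolding EvG_def supp ..
  also have "\<dots> = (\<Sum>p\<in>D. fcomul M f (gm p) * ?\<Phi> (gm p))"
    by (rule sum.reindex_cong[OF inj refl]) simp
  also have "\<dots> = (\<Sum>p\<in>D. f (fst p) * (ev_word \<sigma> (zip (map fst (fst p)) (snd p)) * ev_word \<tau> (zip (snd p) (map snd (fst p)))))"
  proof (rule sum.cong[OF refl])
    fix p assume "p \<in> D"
    show "fcomul M f (gm p) * ?\<Phi> (gm p) = f (fst p) * (ev_word \<sigma> (zip (map fst (fst p)) (snd p)) * ev_word \<tau> (zip (snd p) (map snd (fst p))))"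
      using val[OF \<open>p \<in> D\<close>] by (simp add: gm_def case_prod_beta)
  qed
  also have "\<dots> = (\<Sum>w\<in>?Sf. \<Sum>ks\<in>KS M (length w). f w * (ev_word \<sigma> (zip (map fst w) ks) * ev_word \<tau> (zip ks (map snd w))))"
    unfolding D_def using assms(1)
    by (subst sum.Sigma) (simp_all add: fs_def finite_KS case_prod_beta)
  also have "\<dots> = (\<Sum>w\<in>?Sf. f w * ev_word (\<sigma> \<circ>\<^sub>m \<tau>) w)"
    by (rule sum.cong) (simp_all add: sum_distrib_left[symmetric] inner_sum[OF ran])
  also have "\<dots> = EvG (ev_word (\<sigma> \<circ>\<^sub>m \<tau>)) f" by (simp add: EvG_def)
  finally show "EvG ?\<Phi> (fcomul M f) = EvG (ev_word (\<sigma> \<circ>\<^sub>m \<tau>)) f" .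
qed


lemma Pmat_carrier[simp]: "Pmat N H i j \<in> carrier_mat N N"
  by (simp add: Pmat_def Proj_def)

lemma Pmat_dim[simp]: "dim_row (Pmat N H i j) = N" "dim_col (Pmat N H i j) = N"
  by (simp_all add: Pmat_def Proj_def)

lemma mult_entry: assumes "A \<in> carrier_mat N N" "B \<in> carrier_mat N N" "a < N" "b < N"
  shows "(A * B) $$ (a,b) = (\<Sum>c<N. A $$ (a,c) * B $$ (c,b))"
  using assms by (simp add: scalar_prod_def atLeast0LessThan)

lemma unit_cnj: "cmod x = 1 \<Longrightarrow> cnj x = inverse x"
  by (metis complex_div_cnj div_by_1 divide_inverse_commute mult.comm_neutral of_real_1 power_one)

lemma unit_ne0: "cmod x = 1 \<Longrightarrow> x \<noteq> 0" by auto

lemma Pentry: assumes ph: "partial_hadamard M N H" and ij: "i < M" "j < M" and ab: "a < N" "b < N"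
  shows "Pmat N H i j $$ (a,b) = (H i a / H j a) * cnj (H i b / H j b) / of_nat N"
proof -
  have u: "\<And>i a. i < M \<Longrightarrow> a < N \<Longrightarrow> cmod (H i a) = 1" using ph by (simp add: partial_hadamard_def)
  have "(\<Sum>c<N. complex_of_real ((cmod (H i c / H j c))\<^sup>2)) = (\<Sum>c<N. 1)"
    by (rule sum.cong) (simp_all add: norm_divide u ij)
  then show ?thesis using ab by (simp add: Pmat_def Proj_def)
qed

lemma Pprod_entry: assumes ph: "partial_hadamard M N H" and idx: "i < M" "j < M" "k < M" "l < M"
  and ab: "a < N" "b < N"
  shows "(Pmat N H i j * Pmat N H k l) $$ (a,b) =
    (H i a / H j a) * cnj (H k b / H l b) / (of_nat N * of_nat N) * (\<Sum>c<N. cnj (H i c / H j c) * (H k c / H l c))"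
proof -
  have "(Pmat N H i j * Pmat N H k l) $$ (a,b) = (\<Sum>c<N. Pmat N H i j $$ (a,c) * Pmat N H k l $$ (c,b))"
    by (rule mult_entry) (simp_all add: ab)
  also have "\<dots> = (\<Sum>c<N. ((H i a / H j a) * cnj (H k b / H l b) / (of_nat N * of_nat N)) * (cnj (H i c / H j c) * (H k c / H l c)))"
    by (rule sum.cong) (simp_all add: Pentry[OF ph] idx ab divide_inverse inverse_mult_distrib ac_simps)
  also have "\<dots> = (H i a / H j a) * cnj (H k b / H l b) / (of_nat N * of_nat N) * (\<Sum>c<N. cnj (H i c / H j c) * (H k c / H l c))"
    by (simp add: sum_distrib_left)
  finally show ?thesis .
qed

lemma cnj_div_unit: "cmod x = 1 \<Longrightarrow> cmod y = 1 \<Longrightarrow> cnj (x / y) = y / x"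
  by (simp add: unit_cnj divide_inverse)

lemma Pmat_idem: assumes ph: "partial_hadamard M N H" and ij: "i < M" "j < M"
  shows "Pmat N H i j * Pmat N H i j = Pmat N H i j"
proof (rule eq_matI)
  have u: "\<And>i a. i < M \<Longrightarrow> a < N \<Longrightarrow> cmod (H i a) = 1" using ph by (simp add: partial_hadamard_def)
  fix a b assume a: "a < dim_row (Pmat N H i j)" and b: "b < dim_col (Pmat N H i j)"
  then have ab: "a < N" "b < N" by (simp_all add: Pmat_def Proj_def)
  have "(\<Sum>c<N. cnj (H i c / H j c) * (H i c / H j c)) = (\<Sum>c<N. 1)"
  proof (rule sum.cong[OF refl])
    fix c assume "c \<in> {..<N}"
    then have c: "cmod (H i c) = 1" "cmod (H j c) = 1" using u ij by auto
    show "cnj (H i c / H j c) * (H i c / H j c) = 1"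
      unfolding cnj_div_unit[OF c] using unit_ne0[OF c(1)] unit_ne0[OF c(2)] by (simp add: field_simps)
  qed
  then have s: "(\<Sum>c<N. cnj (H i c / H j c) * (H i c / H j c)) = of_nat N" by simp
  have N0: "(of_nat N :: complex) \<noteq> 0" using ab by simp
  show "(Pmat N H i j * Pmat N H i j) $$ (a, b) = Pmat N H i j $$ (a, b)"
    unfolding Pprod_entry[OF ph ij ij ab] Pentry[OF ph ij ab] s using N0 by (simp add: field_simps)
qed (simp_all add: Pmat_def Proj_def)

lemma Pmat_row_orth: assumes ph: "partial_hadamard M N H" and idx: "i < M" "j < M" "k < M" "j \<noteq> k"
  shows "Pmat N H i j * Pmat N H i k = 0\<^sub>m N N"
proof (rule eq_matI)
  have u: "\<And>i a. i < M \<Longrightarrow> a < N \<Longrightarrow> cmod (H i a) = 1" using ph by (simp add: partial_hadamard_def)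
  fix a b assume "a < dim_row (0\<^sub>m N N :: complex mat)" "b < dim_col (0\<^sub>m N N :: complex mat)"
  then have ab: "a < N" "b < N" by simp_all
  have "(\<Sum>c<N. cnj (H i c / H j c) * (H i c / H k c)) = (\<Sum>c<N. H j c * cnj (H k c))"
  proof (rule sum.cong[OF refl])
    fix c assume "c \<in> {..<N}"
    then have c: "cmod (H i c) = 1" "cmod (H j c) = 1" "cmod (H k c) = 1" using u idx by auto
    show "cnj (H i c / H j c) * (H i c / H k c) = H j c * cnj (H k c)"
      unfolding cnj_div_unit[OF c(1,2)] unit_cnj[OF c(3)] using unit_ne0[OF c(1)] unit_ne0[OF c(2)] unit_ne0[OF c(3)]
      by (simp add: field_simps)
  qed
  also have "\<dots> = 0" using ph idx by (simp add: partial_hadamard_def)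
  finally show "(Pmat N H i j * Pmat N H i k) $$ (a, b) = 0\<^sub>m N N $$ (a, b)"
    unfolding Pprod_entry[OF ph idx(1,2) idx(1,3) ab] using ab by simp
qed (simp_all add: Pmat_def Proj_def)

lemma Pmat_col_orth: assumes ph: "partial_hadamard M N H" and idx: "i < M" "j < M" "k < M" "i \<noteq> k"
  shows "Pmat N H i j * Pmat N H k j = 0\<^sub>m N N"
proof (rule eq_matI)
  have u: "\<And>i a. i < M \<Longrightarrow> a < N \<Longrightarrow> cmod (H i a) = 1" using ph by (simp add: partial_hadamard_def)
  fix a b assume "a < dim_row (0\<^sub>m N N :: complex mat)" "b < dim_col (0\<^sub>m N N :: complex mat)"
  then have ab: "a < N" "b < N" by simp_all
  have "(\<Sum>c<N. cnj (H i c / H j c) * (H k c / H j c)) = (\<Sum>c<N. H k c * cnj (H i c))"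
  proof (rule sum.cong[OF refl])
    fix c assume "c \<in> {..<N}"
    then have c: "cmod (H i c) = 1" "cmod (H j c) = 1" "cmod (H k c) = 1" using u idx by auto
    show "cnj (H i c / H j c) * (H k c / H j c) = H k c * cnj (H i c)"
      unfolding cnj_div_unit[OF c(1,2)] unit_cnj[OF c(1)] using unit_ne0[OF c(1)] unit_ne0[OF c(2)] unit_ne0[OF c(3)]
      by (simp add: field_simps)
  qed
  also have "\<dots> = 0" using ph idx by (simp add: partial_hadamard_def)
  finally show "(Pmat N H i j * Pmat N H k j) $$ (a, b) = 0\<^sub>m N N $$ (a, b)"
    unfolding Pprod_entry[OF ph idx(1,2) idx(3,2) ab] using ab by simp
qed (simp_all add: Pmat_def Proj_def)


lemma smult_smult_mat: "a \<cdot>\<^sub>m (b \<cdot>\<^sub>m (A :: complex mat)) = (a * b) \<cdot>\<^sub>m A"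
  by (rule eq_matI) auto
lemma one_smult_mat': "(1::complex) \<cdot>\<^sub>m A = A" by (rule eq_matI) auto
lemma zero_smult_mat': "(A :: complex mat) \<in> carrier_mat N N \<Longrightarrow> (0::complex) \<cdot>\<^sub>m A = 0\<^sub>m N N" by (rule eq_matI) auto

definition Qm :: "nat \<Rightarrow> (nat \<Rightarrow> nat \<Rightarrow> complex) \<Rightarrow> (nat \<times> nat \<Rightarrow> bool) \<Rightarrow> nat \<times> nat \<Rightarrow> complex mat" where
  "Qm N H \<epsilon> p = (if \<epsilon> p then Pmat N H (fst p) (snd p) else 1\<^sub>m N - Pmat N H (fst p) (snd p))"

fun Eprod :: "nat \<Rightarrow> (nat \<Rightarrow> nat \<Rightarrow> complex) \<Rightarrow> (nat \<times> nat \<Rightarrow> bool) \<Rightarrow> (nat \<times> nat) list \<Rightarrow> complex mat" where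
  "Eprod N H \<epsilon> [] = 1\<^sub>m N"
| "Eprod N H \<epsilon> (p # L) = Qm N H \<epsilon> p * Eprod N H \<epsilon> L"

lemma Qm_carrier[simp]: "Qm N H \<epsilon> p \<in> carrier_mat N N"
  by (simp add: Qm_def minus_carrier_mat)
lemma Eprod_carrier[simp]: "Eprod N H \<epsilon> L \<in> carrier_mat N N"
  by (induction L) (simp_all add: mult_carrier_mat[OF Qm_carrier])

lemma Eprod_upd: "p \<notin> set L \<Longrightarrow> Eprod N H (\<epsilon>(p := b)) L = Eprod N H \<epsilon> L"
  by (induction L) (auto simp: Qm_def)

lemma decomp: assumes "distinct L" "X \<in> carrier_mat N N" "E \<in> carrier_mat N N"
  "\<And>\<epsilon>. X * E * Eprod N H \<epsilon> L = 0\<^sub>m N N"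
  shows "X * E = 0\<^sub>m N N"
  using assms
proof (induction L arbitrary: E)
  case Nil
  then show ?case by (metis Eprod.simps(1) mult_carrier_mat right_mult_one_mat)
next
  case (Cons p L)
  let ?P = "Pmat N H (fst p) (snd p)"
  have pL: "p \<notin> set L" "distinct L" using Cons.prems(1) by auto
  have P: "?P \<in> carrier_mat N N" by simp
  have 1: "X * (E * ?P) = 0\<^sub>m N N"
  proof (rule Cons.IH[OF pL(2) Cons.prems(2)])
    show "E * ?P \<in> carrier_mat N N" using Cons.prems(3) by simp
    fix \<epsilon>
    have "X * E * Eprod N H (\<epsilon>(p := True)) (p # L) = 0\<^sub>m N N" by (rule Cons.prems(4))
    then have "X * E * (?P * Eprod N H \<epsilon> L) = 0\<^sub>m N N" by (simp add: Qm_def Eprod_upd[OF pL(1)])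
    then show "X * (E * ?P) * Eprod N H \<epsilon> L = 0\<^sub>m N N"
      using Cons.prems(2,3) P by (simp add: assoc_mult_mat[of _ N N _ N _ N])
  qed
  have 2: "X * (E * (1\<^sub>m N - ?P)) = 0\<^sub>m N N"
  proof (rule Cons.IH[OF pL(2) Cons.prems(2)])
    show "E * (1\<^sub>m N - ?P) \<in> carrier_mat N N" using Cons.prems(3) by (simp add: minus_carrier_mat)
    fix \<epsilon>
    have "X * E * Eprod N H (\<epsilon>(p := False)) (p # L) = 0\<^sub>m N N" by (rule Cons.prems(4))
    then have "X * E * ((1\<^sub>m N - ?P) * Eprod N H \<epsilon> L) = 0\<^sub>m N N" by (simp add: Qm_def Eprod_upd[OF pL(1)])
    moreover have "1\<^sub>m N - ?P \<in> carrier_mat N N" by (simp add: minus_carrier_mat)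
    ultimately show "X * (E * (1\<^sub>m N - ?P)) * Eprod N H \<epsilon> L = 0\<^sub>m N N"
      using Cons.prems(2,3) by (simp add: assoc_mult_mat[of _ N N _ N _ N])
  qed
  have XE: "X * E \<in> carrier_mat N N" using Cons.prems(2,3) by simp
  have "X * E = X * E * (?P + (1\<^sub>m N - ?P))"
  proof -
    have "?P + (1\<^sub>m N - ?P) = 1\<^sub>m N" by (rule eq_matI) (simp_all add: Pmat_def Proj_def)
    then show ?thesis using right_mult_one_mat[OF XE] by simp
  qed
  also have "\<dots> = X * E * ?P + X * E * (1\<^sub>m N - ?P)"
    by (rule mult_add_distrib_mat[OF XE P]) (simp add: minus_carrier_mat)
  also have "\<dots> = X * (E * ?P) + X * (E * (1\<^sub>m N - ?P))"
  proof -
    have Q: "1\<^sub>m N - ?P \<in> carrier_mat N N" by (simp add: minus_carrier_mat)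
    show ?thesis using assoc_mult_mat[OF Cons.prems(2,3) P] assoc_mult_mat[OF Cons.prems(2,3) Q] by simp
  qed
  also have "\<dots> = 0\<^sub>m N N" unfolding 1 2 by (rule eq_matI) simp_all
  finally show ?case .
qed


lemma P_Q_comm: assumes comm: "\<forall>i<M. \<forall>j<M. \<forall>k<M. \<forall>l<M. Pmat N H i j * Pmat N H k l = Pmat N H k l * Pmat N H i j"
  and idx: "i < M" "j < M" "fst q < M" "snd q < M"
  shows "Pmat N H i j * Qm N H \<epsilon> q = Qm N H \<epsilon> q * Pmat N H i j"
proof (cases "\<epsilon> q")
  case True
  then show ?thesis using comm idx by (simp add: Qm_def)
next
  case False
  let ?P = "Pmat N H i j" and ?Q = "Pmat N H (fst q) (snd q)"
  have "?P * (1\<^sub>m N - ?Q) = ?P * 1\<^sub>m N - ?P * ?Q" by (rule mult_minus_distrib_mat[where nr=N and n=N and nc=N]) simp_all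
  also have "\<dots> = 1\<^sub>m N * ?P - ?Q * ?P"
  proof -
    have "?P * ?Q = ?Q * ?P" using comm idx by blast
    then show ?thesis by simp
  qed
  also have "\<dots> = (1\<^sub>m N - ?Q) * ?P" by (rule minus_mult_distrib_mat[where nr=N and n=N and nc=N, symmetric]) simp_all
  finally show ?thesis using False by (simp add: Qm_def)
qed

lemma eigen: assumes ph: "partial_hadamard M N H"
  and comm: "\<forall>i<M. \<forall>j<M. \<forall>k<M. \<forall>l<M. Pmat N H i j * Pmat N H k l = Pmat N H k l * Pmat N H i j"
  and L: "set L \<subseteq> {..<M} \<times> {..<M}" and p: "(i,j) \<in> set L"
  shows "Pmat N H i j * Eprod N H \<epsilon> L = (if \<epsilon> (i,j) then Eprod N H \<epsilon> L else 0\<^sub>m N N)"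
  using L p
proof (induction L)
  case Nil
  then show ?case by simp
next
  case (Cons q L)
  let ?P = "Pmat N H i j"
  have ij: "i < M" "j < M" using Cons.prems by auto
  have q: "fst q < M" "snd q < M" using Cons.prems(1) by (auto simp: mem_Times_iff)
  have R: "Eprod N H \<epsilon> L \<in> carrier_mat N N" by simp
  show ?case
  proof (cases "q = (i,j)")
    case True
    have "?P * Eprod N H \<epsilon> (q # L) = (?P * Qm N H \<epsilon> q) * Eprod N H \<epsilon> L"
      by (simp add: assoc_mult_mat[of _ N N _ N _ N])
    also have "?P * Qm N H \<epsilon> q = (if \<epsilon> (i,j) then Qm N H \<epsilon> q else 0\<^sub>m N N)"
    proof (cases "\<epsilon> (i,j)")
      case True
      then show ?thesis using \<open>q = (i,j)\<close> Pmat_idem[OF ph ij] by (simp add: Qm_def)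
    next
      case False
      have "?P * (1\<^sub>m N - ?P) = ?P * 1\<^sub>m N - ?P * ?P" by (rule mult_minus_distrib_mat[where nr=N and n=N and nc=N]) simp_all
      also have "\<dots> = 0\<^sub>m N N" unfolding Pmat_idem[OF ph ij] by (rule eq_matI) simp_all
      finally show ?thesis using False \<open>q = (i,j)\<close> by (simp add: Qm_def)
    qed
    finally show ?thesis using left_mult_zero_mat[OF R, of N] by auto
  next
    case False
    then have p: "(i,j) \<in> set L" using Cons.prems(2) by simp
    have IH: "?P * Eprod N H \<epsilon> L = (if \<epsilon> (i,j) then Eprod N H \<epsilon> L else 0\<^sub>m N N)"
      using Cons.IH Cons.prems(1) p by simp
    have "?P * Eprod N H \<epsilon> (q # L) = (?P * Qm N H \<epsilon> q) * Eprod N H \<epsilon> L"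
      by (simp add: assoc_mult_mat[of _ N N _ N _ N])
    also have "\<dots> = (Qm N H \<epsilon> q * ?P) * Eprod N H \<epsilon> L" using P_Q_comm[OF comm ij q] by simp
    also have "\<dots> = Qm N H \<epsilon> q * (?P * Eprod N H \<epsilon> L)" by (simp add: assoc_mult_mat[of _ N N _ N _ N])
    also have "\<dots> = (if \<epsilon> (i,j) then Eprod N H \<epsilon> (q # L) else 0\<^sub>m N N)"
      unfolding IH by (simp add: right_mult_zero_mat[of _ N N])
    finally show ?thesis .
  qed
qed

abbreviation Pgens :: "nat \<Rightarrow> nat \<Rightarrow> (nat \<Rightarrow> nat \<Rightarrow> complex) \<Rightarrow> complex mat set" where
  "Pgens M N H \<equiv> {Pmat N H i j | i j. i < M \<and> j < M}"

lemma alg_carrier: "x \<in> gen_alg N G \<Longrightarrow> (\<And>g. g \<in> G \<Longrightarrow> g \<in> carrier_mat N N) \<Longrightarrow> x \<in> carrier_mat N N"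
  by (induction rule: gen_alg.induct) auto

lemma alg_eigen: assumes ph: "partial_hadamard M N H"
  and comm: "\<forall>i<M. \<forall>j<M. \<forall>k<M. \<forall>l<M. Pmat N H i j * Pmat N H k l = Pmat N H k l * Pmat N H i j"
  and L: "set L = {..<M} \<times> {..<M}"
  and x: "x \<in> P_algebra M N H"
  shows "x \<in> carrier_mat N N \<and> (\<exists>c. x * Eprod N H \<epsilon> L = c \<cdot>\<^sub>m Eprod N H \<epsilon> L)"
  using x unfolding P_algebra_def
proof (induction rule: gen_alg.induct)
  case one
  then show ?case using one_smult_mat' left_mult_one_mat[OF Eprod_carrier] by (intro conjI exI[of _ 1]) simp_all
next
  case (gen x)
  then obtain i j where x: "x = Pmat N H i j" "i < M" "j < M" by blast
  have e: "x * Eprod N H \<epsilon> L = (if \<epsilon> (i,j) then Eprod N H \<epsilon> L else 0\<^sub>m N N)"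
    unfolding x(1) by (rule eigen[OF ph comm]) (use L x in auto)
  show ?case
  proof (cases "\<epsilon> (i,j)")
    case True
    then show ?thesis using e x one_smult_mat' by (intro conjI exI[of _ 1]) simp_all
  next
    case False
    then show ?thesis using e x zero_smult_mat'[OF Eprod_carrier] by (intro conjI exI[of _ 0]) simp_all
  qed
next
  case (add x y)
  then obtain cx cy where c: "x * Eprod N H \<epsilon> L = cx \<cdot>\<^sub>m Eprod N H \<epsilon> L" "y * Eprod N H \<epsilon> L = cy \<cdot>\<^sub>m Eprod N H \<epsilon> L"
    by blast
  have "(x + y) * Eprod N H \<epsilon> L = x * Eprod N H \<epsilon> L + y * Eprod N H \<epsilon> L"
    by (rule add_mult_distrib_mat[where nr=N and n=N and nc=N]) (use add in auto)
  also have "\<dots> = (cx + cy) \<cdot>\<^sub>m Eprod N H \<epsilon> L" unfolding c by (rule eq_matI) (simp_all add: distrib_right)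
  finally show ?case using add by auto
next
  case (smult x c)
  then obtain cx where cx: "x * Eprod N H \<epsilon> L = cx \<cdot>\<^sub>m Eprod N H \<epsilon> L" by blast
  have "(c \<cdot>\<^sub>m x) * Eprod N H \<epsilon> L = c \<cdot>\<^sub>m (x * Eprod N H \<epsilon> L)"
    by (rule mult_smult_assoc_mat[where nr=N and n=N and nc=N]) (use smult in auto)
  also have "\<dots> = (c * cx) \<cdot>\<^sub>m Eprod N H \<epsilon> L" unfolding cx smult_smult_mat ..
  finally show ?case using smult by auto
next
  case (mult x y)
  then obtain cx cy where c: "x * Eprod N H \<epsilon> L = cx \<cdot>\<^sub>m Eprod N H \<epsilon> L" "y * Eprod N H \<epsilon> L = cy \<cdot>\<^sub>m Eprod N H \<epsilon> L"
    by blast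
  have xc: "x \<in> carrier_mat N N" "y \<in> carrier_mat N N" using mult by auto
  have "(x * y) * Eprod N H \<epsilon> L = x * (y * Eprod N H \<epsilon> L)" by (rule assoc_mult_mat[OF xc Eprod_carrier])
  also have "\<dots> = cy \<cdot>\<^sub>m (x * Eprod N H \<epsilon> L)" unfolding c(2) by (rule mult_smult_distrib[where nr=N and n=N and nc=N]) (use xc in auto)
  also have "\<dots> = (cy * cx) \<cdot>\<^sub>m Eprod N H \<epsilon> L" unfolding c(1) smult_smult_mat ..
  finally show ?case using xc by auto
qed


lemma make_char: assumes E: "E \<in> carrier_mat N N" "E \<noteq> 0\<^sub>m N N"
  and A: "\<And>x. x \<in> A \<Longrightarrow> x \<in> carrier_mat N N \<and> (\<exists>c. x * E = c \<cdot>\<^sub>m E)"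
  shows "\<exists>\<chi>. character N A \<chi> \<and> (\<forall>x\<in>A. x * E = \<chi> x \<cdot>\<^sub>m E)"
proof -
  obtain a0 b0 where ab: "a0 < N" "b0 < N" "E $$ (a0,b0) \<noteq> 0"
  proof -
    have "\<not> (\<forall>a<N. \<forall>b<N. E $$ (a,b) = 0)"
    proof
      assume "\<forall>a<N. \<forall>b<N. E $$ (a,b) = 0"
      then have "E = 0\<^sub>m N N" using E(1) by (intro eq_matI) auto
      then show False using E(2) by simp
    qed
    then show ?thesis using that by blast
  qed
  define \<chi> where "\<chi> = (\<lambda>x. (x * E) $$ (a0,b0) / E $$ (a0,b0))"
  have key: "\<chi> x = c" if "x * E = c \<cdot>\<^sub>m E" for x c
    using that ab E(1) unfolding \<chi>_def by simp
  have ex: "x * E = \<chi> x \<cdot>\<^sub>m E" if xA: "x \<in> A" for x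
  proof -
    obtain c where c: "x * E = c \<cdot>\<^sub>m E" using A[OF xA] by blast
    then show ?thesis using key[OF c] by simp
  qed
  have "character N A \<chi>"
    unfolding character_def
  proof (intro conjI ballI allI)
    show "\<chi> (1\<^sub>m N) = 1" by (rule key) (simp add: left_mult_one_mat[OF E(1)] one_smult_mat')
  next
    fix x y assume xy: "x \<in> A" "y \<in> A"
    have xc: "x \<in> carrier_mat N N" "y \<in> carrier_mat N N" using A xy by auto
    have "(x + y) * E = x * E + y * E" by (rule add_mult_distrib_mat[OF xc E(1)])
    also have "\<dots> = (\<chi> x + \<chi> y) \<cdot>\<^sub>m E" unfolding ex[OF xy(1)] ex[OF xy(2)]
      by (rule eq_matI) (simp_all add: distrib_right)
    finally show "\<chi> (x + y) = \<chi> x + \<chi> y" by (rule key)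
    have "(x * y) * E = x * (y * E)" by (rule assoc_mult_mat[OF xc E(1)])
    also have "\<dots> = \<chi> y \<cdot>\<^sub>m (x * E)" unfolding ex[OF xy(2)] by (rule mult_smult_distrib[OF xc(1) E(1)])
    also have "\<dots> = (\<chi> x * \<chi> y) \<cdot>\<^sub>m E" unfolding ex[OF xy(1)] smult_smult_mat by (simp add: mult.commute)
    finally show "\<chi> (x * y) = \<chi> x * \<chi> y" by (rule key)
  next
    fix x c assume x: "x \<in> A"
    have xc: "x \<in> carrier_mat N N" using A x by auto
    have "(c \<cdot>\<^sub>m x) * E = c \<cdot>\<^sub>m (x * E)" by (rule mult_smult_assoc_mat[OF xc E(1)])
    also have "\<dots> = (c * \<chi> x) \<cdot>\<^sub>m E" unfolding ex[OF x] smult_smult_mat ..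
    finally show "\<chi> (c \<cdot>\<^sub>m x) = c * \<chi> x" by (rule key)
  qed
  then show ?thesis using ex by blast
qed

lemma one_alg: "1\<^sub>m N \<in> P_algebra M N H" unfolding P_algebra_def by (rule gen_alg.one)
lemma P_alg: "i < M \<Longrightarrow> j < M \<Longrightarrow> Pmat N H i j \<in> P_algebra M N H"
  unfolding P_algebra_def by (rule gen_alg.gen) blast
lemma mult_alg: "x \<in> P_algebra M N H \<Longrightarrow> y \<in> P_algebra M N H \<Longrightarrow> x * y \<in> P_algebra M N H"
  unfolding P_algebra_def by (rule gen_alg.mult)
lemma add_alg: "x \<in> P_algebra M N H \<Longrightarrow> y \<in> P_algebra M N H \<Longrightarrow> x + y \<in> P_algebra M N H"
  unfolding P_algebra_def by (rule gen_alg.add)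
lemma smult_alg: "x \<in> P_algebra M N H \<Longrightarrow> c \<cdot>\<^sub>m x \<in> P_algebra M N H"
  unfolding P_algebra_def by (rule gen_alg.smult)
lemma carrier_alg: "x \<in> P_algebra M N H \<Longrightarrow> x \<in> carrier_mat N N"
  unfolding P_algebra_def by (erule alg_carrier) auto

lemma char_zero: assumes "character N (P_algebra M N H) \<chi>" shows "\<chi> (0\<^sub>m N N) = 0"
proof -
  have "0\<^sub>m N N = (0::complex) \<cdot>\<^sub>m 1\<^sub>m N" by (rule eq_matI) auto
  moreover have "\<forall>x\<in>P_algebra M N H. \<forall>c. \<chi> (c \<cdot>\<^sub>m x) = c * \<chi> x" using assms unfolding character_def by simp
  ultimately show ?thesis using one_alg by simp
qed

lemma char_P01: assumes ph: "partial_hadamard M N H" and ch: "character N (P_algebra M N H) \<chi>"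
  and ij: "i < M" "j < M"
  shows "\<chi> (Pmat N H i j) = 0 \<or> \<chi> (Pmat N H i j) = 1"
proof -
  have "\<chi> (Pmat N H i j) = \<chi> (Pmat N H i j * Pmat N H i j)" by (simp add: Pmat_idem[OF ph ij])
  also have "\<dots> = \<chi> (Pmat N H i j) * \<chi> (Pmat N H i j)" using ch P_alg[OF ij] unfolding character_def by blast
  finally have "\<chi> (Pmat N H i j) * (\<chi> (Pmat N H i j) - 1) = 0" by (simp add: algebra_simps)
  then show ?thesis by simp
qed

lemma char_orth: assumes ch: "character N (P_algebra M N H) \<chi>"
  and x: "x \<in> P_algebra M N H" "y \<in> P_algebra M N H" and xy: "x * y = 0\<^sub>m N N"
  and "\<chi> x = 1" "\<chi> y = 1" shows False
proof -
  have "\<chi> (x * y) = \<chi> x * \<chi> y" using ch x unfolding character_def by blast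
  then show False using xy assms(5,6) char_zero[OF ch] by simp
qed

lemma sigma_of_char: assumes ph: "partial_hadamard M N H" and ch: "character N (P_algebra M N H) \<chi>"
  shows "\<exists>\<sigma>. \<sigma> \<in> char_pperms M N H \<and> (\<forall>i<M. \<forall>j<M. \<sigma> j = Some i \<longleftrightarrow> \<chi> (Pmat N H i j) = 1)"
proof -
  define \<sigma> where "\<sigma> = (\<lambda>j. if j < M \<and> (\<exists>i<M. \<chi> (Pmat N H i j) = 1)
      then Some (SOME i. i < M \<and> \<chi> (Pmat N H i j) = 1) else None)"
  have uniq: "i = k" if "i < M" "k < M" "j < M" "\<chi> (Pmat N H i j) = 1" "\<chi> (Pmat N H k j) = 1" for i k j
  proof (rule ccontr)
    assume "i \<noteq> k"
    then have "Pmat N H i j * Pmat N H k j = 0\<^sub>m N N" using Pmat_col_orth[OF ph] that by blast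
    then show False using char_orth[OF ch P_alg P_alg] that by blast
  qed
  have some: "\<sigma> j = Some i \<Longrightarrow> j < M \<and> i < M \<and> \<chi> (Pmat N H i j) = 1" for i j
  proof -
    assume s: "\<sigma> j = Some i"
    then have c: "j < M" "\<exists>i<M. \<chi> (Pmat N H i j) = 1" unfolding \<sigma>_def by (auto split: if_splits)
    then have "i = (SOME i. i < M \<and> \<chi> (Pmat N H i j) = 1)" using s unfolding \<sigma>_def by simp
    moreover have "(SOME i. i < M \<and> \<chi> (Pmat N H i j) = 1) < M \<and> \<chi> (Pmat N H (SOME i. i < M \<and> \<chi> (Pmat N H i j) = 1) j) = 1"
      by (rule someI_ex) (use c(2) in blast)
    ultimately show ?thesis using c by simp
  qed
  have iff: "\<forall>i<M. \<forall>j<M. \<sigma> j = Some i \<longleftrightarrow> \<chi> (Pmat N H i j) = 1"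
  proof (intro allI impI iffI)
    fix i j assume "i < M" "j < M" "\<sigma> j = Some i"
    then show "\<chi> (Pmat N H i j) = 1" using some by blast
  next
    fix i j assume ij: "i < M" "j < M" and c: "\<chi> (Pmat N H i j) = 1"
    then have "\<exists>i<M. \<chi> (Pmat N H i j) = 1" by blast
    then have "\<sigma> j = Some (SOME i. i < M \<and> \<chi> (Pmat N H i j) = 1)" unfolding \<sigma>_def using ij by simp
    then obtain i' where "\<sigma> j = Some i'" by blast
    then have "i' < M" "\<chi> (Pmat N H i' j) = 1" using some by blast+
    then have "i' = i" using uniq[OF _ ij(1) ij(2) _ c] by blast
    then show "\<sigma> j = Some i" using \<open>\<sigma> j = Some i'\<close> by simp
  qed
  have "dom \<sigma> \<subseteq> {..<M}"
  proof
    fix j assume "j \<in> dom \<sigma>"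
    then obtain i where "\<sigma> j = Some i" by blast
    then show "j \<in> {..<M}" using some by simp
  qed
  moreover have "ran \<sigma> \<subseteq> {..<M}"
  proof
    fix i assume "i \<in> ran \<sigma>"
    then obtain j where "\<sigma> j = Some i" unfolding ran_def by blast
    then show "i \<in> {..<M}" using some by simp
  qed
  ultimately have "\<sigma> \<in> char_pperms M N H" unfolding char_pperms_def mem_Collect_eq
    using ch iff by (intro conjI exI[of _ \<chi>]) simp_all
  then show ?thesis using iff by (intro exI[of _ \<sigma>] conjI)
qed

lemma char_good: assumes ph: "partial_hadamard M N H" and s: "\<sigma> \<in> char_pperms M N H"
  shows "good M \<sigma>"
proof -
  obtain \<chi> where ch: "character N (P_algebra M N H) \<chi>"
    and iff: "\<forall>i<M. \<forall>j<M. \<sigma> j = Some i \<longleftrightarrow> \<chi> (Pmat N H i j) = 1"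
    and dr: "dom \<sigma> \<subseteq> {..<M}" "ran \<sigma> \<subseteq> {..<M}"
    using s unfolding char_pperms_def mem_Collect_eq by (elim conjE exE) (rule that)
  have b: "\<sigma> j = Some i \<Longrightarrow> j < M \<and> i < M" for i j
  proof -
    assume a: "\<sigma> j = Some i"
    then have "j \<in> dom \<sigma>" "i \<in> ran \<sigma>" by (auto simp: ran_def)
    then show ?thesis using dr by auto
  qed
  have "j = k" if "\<sigma> j = Some i" "\<sigma> k = Some i" for j k i
  proof (rule ccontr)
    assume "j \<noteq> k"
    have m: "j < M" "k < M" "i < M" using b that by blast+
    then have "Pmat N H i j * Pmat N H i k = 0\<^sub>m N N" using Pmat_row_orth[OF ph] \<open>j \<noteq> k\<close> by blast
    moreover have "\<chi> (Pmat N H i j) = 1" "\<chi> (Pmat N H i k) = 1" using iff m that by blast+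
    ultimately show False using char_orth[OF ch P_alg P_alg] m by blast
  qed
  then show ?thesis using b unfolding good_def by metis
qed


lemma Pword_carrier[simp]: "Pword N H w \<in> carrier_mat N N"
proof (induction w)
  case Nil then show ?case by simp
next
  case (Cons x w)
  obtain i j where "x = (i,j)" by (cases x)
  then show ?case using Cons mult_carrier_mat[OF Pmat_carrier Cons.IH] by simp
qed

lemma Pword_dim[simp]: "dim_row (Pword N H w) = N" "dim_col (Pword N H w) = N"
  using Pword_carrier[of N H w] unfolding carrier_mat_def by auto

lemma Pword_alg: "set w \<subseteq> {..<M} \<times> {..<M} \<Longrightarrow> Pword N H w \<in> P_algebra M N H"
proof (induction w)
  case Nil then show ?case by (simp add: one_alg)
next
  case (Cons x w)
  obtain i j where x: "x = (i,j)" by (cases x)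
  then have "i < M" "j < M" using Cons.prems by auto
  then show ?case using Cons x by (simp add: mult_alg P_alg)
qed

lemma char_mult: "character N A \<chi> \<Longrightarrow> x \<in> A \<Longrightarrow> y \<in> A \<Longrightarrow> \<chi> (x * y) = \<chi> x * \<chi> y"
  unfolding character_def by blast
lemma char_add: "character N A \<chi> \<Longrightarrow> x \<in> A \<Longrightarrow> y \<in> A \<Longrightarrow> \<chi> (x + y) = \<chi> x + \<chi> y"
  unfolding character_def by blast
lemma char_smult: "character N A \<chi> \<Longrightarrow> x \<in> A \<Longrightarrow> \<chi> (c \<cdot>\<^sub>m x) = c * \<chi> x"
  unfolding character_def by blast

lemma char_Pword: assumes ph: "partial_hadamard M N H" and ch: "character N (P_algebra M N H) \<chi>"
  and iff: "\<forall>i<M. \<forall>j<M. \<sigma> j = Some i \<longleftrightarrow> \<chi> (Pmat N H i j) = 1"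
  shows "set w \<subseteq> {..<M} \<times> {..<M} \<Longrightarrow> \<chi> (Pword N H w) = ev_word \<sigma> w"
proof (induction w)
  case Nil then show ?case using ch by (simp add: character_def)
next
  case (Cons x w)
  obtain i j where x: "x = (i,j)" by (cases x)
  then have ij: "i < M" "j < M" using Cons.prems by auto
  have w: "set w \<subseteq> {..<M} \<times> {..<M}" using Cons.prems by simp
  have "\<chi> (Pmat N H i j) = (if \<sigma> j = Some i then 1 else 0)"
    using char_P01[OF ph ch ij] iff ij by auto
  then show ?case using x char_mult[OF ch P_alg[OF ij] Pword_alg[OF w]] Cons.IH[OF w] by (simp add: ev_cons)
qed

definition MS :: "nat \<Rightarrow> (nat \<Rightarrow> nat \<Rightarrow> complex) \<Rightarrow> felem \<Rightarrow> word set \<Rightarrow> complex mat" where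
  "MS N H f B = mat N N (\<lambda>(a, b). \<Sum>w\<in>B. f w * (Pword N H w $$ (a, b)))"

lemma MS_props: assumes ch: "character N (P_algebra M N H) \<chi>"
  shows "finite B \<Longrightarrow> (\<forall>w\<in>B. set w \<subseteq> {..<M} \<times> {..<M}) \<Longrightarrow>
    MS N H f B \<in> P_algebra M N H \<and> \<chi> (MS N H f B) = (\<Sum>w\<in>B. f w * \<chi> (Pword N H w))"
proof (induction B rule: finite_induct)
  case empty
  have "MS N H f {} = (0::complex) \<cdot>\<^sub>m 1\<^sub>m N" unfolding MS_def by (rule eq_matI) auto
  then show ?case using smult_alg[OF one_alg] char_smult[OF ch one_alg, of 0] by simp
next
  case (insert w B)
  have wB: "set w \<subseteq> {..<M} \<times> {..<M}" "\<forall>w\<in>B. set w \<subseteq> {..<M} \<times> {..<M}" using insert.prems by auto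
  have IH: "MS N H f B \<in> P_algebra M N H" "\<chi> (MS N H f B) = (\<Sum>w\<in>B. f w * \<chi> (Pword N H w))"
    using insert.IH[OF wB(2)] by auto
  have pw: "Pword N H w \<in> carrier_mat N N" by simp
  have eq: "MS N H f (insert w B) = f w \<cdot>\<^sub>m Pword N H w + MS N H f B"
    unfolding MS_def using insert.hyps pw by (intro eq_matI) (simp_all add: sum.insert)
  have al: "f w \<cdot>\<^sub>m Pword N H w \<in> P_algebra M N H" by (rule smult_alg[OF Pword_alg[OF wB(1)]])
  show ?case unfolding eq
    using add_alg[OF al IH(1)] char_add[OF ch al IH(1)] char_smult[OF ch Pword_alg[OF wB(1)]] IH(2) insert.hyps
    by (simp add: sum.insert)
qed

lemma eval_char: assumes ph: "partial_hadamard M N H" and ch: "character N (P_algebra M N H) \<chi>"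
  and iff: "\<forall>i<M. \<forall>j<M. \<sigma> j = Some i \<longleftrightarrow> \<chi> (Pmat N H i j) = 1"
  and f: "f \<in> free_alg M"
  shows "piH N H f \<in> P_algebra M N H" "\<chi> (piH N H f) = EvG (ev_word \<sigma>) f"
proof -
  have fin: "finite {w. f w \<noteq> 0}" and sw: "\<forall>w\<in>{w. f w \<noteq> 0}. set w \<subseteq> {..<M} \<times> {..<M}"
    using f unfolding free_alg_def by auto
  have pm: "piH N H f = MS N H f {w. f w \<noteq> 0}" unfolding piH_def MS_def ..
  note m = MS_props[OF ch fin sw, of f]
  show "piH N H f \<in> P_algebra M N H" using m pm by simp
  have "\<chi> (piH N H f) = (\<Sum>w\<in>{w. f w \<noteq> 0}. f w * \<chi> (Pword N H w))" using m pm by simp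
  also have "\<dots> = EvG (ev_word \<sigma>) f" unfolding EvG_def
    by (rule sum.cong[OF refl]) (use sw char_Pword[OF ph ch iff] in simp)
  finally show "\<chi> (piH N H f) = EvG (ev_word \<sigma>) f" .
qed


abbreviation L0 :: "nat \<Rightarrow> (nat \<times> nat) list" where "L0 M \<equiv> List.product [0..<M] [0..<M]"
lemma L0_set: "set (L0 M) = {..<M} \<times> {..<M}" by auto
lemma L0_distinct: "distinct (L0 M)" by (simp add: distinct_product)

lemma G_good: assumes ph: "partial_hadamard M N H" and s: "\<sigma> \<in> gen_semigroup (char_pperms M N H)"
  shows "good M \<sigma>"
  using gen_good[OF _ s] char_good[OF ph] by blast

lemma factor: assumes ph: "partial_hadamard M N H"
  and comm: "\<forall>i<M. \<forall>j<M. \<forall>k<M. \<forall>l<M. Pmat N H i j * Pmat N H k l = Pmat N H k l * Pmat N H i j"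
  and f: "f \<in> free_alg M" and q: "qmap (gen_semigroup (char_pperms M N H)) f = (\<lambda>_. 0)"
  shows "piH N H f = 0\<^sub>m N N"
proof -
  let ?G = "gen_semigroup (char_pperms M N H)"
  let ?X = "piH N H f"
  have X: "?X \<in> carrier_mat N N" unfolding piH_def by simp
  have "?X * 1\<^sub>m N = 0\<^sub>m N N"
  proof (rule decomp[OF L0_distinct X one_carrier_mat])
    fix \<epsilon>
    let ?E = "Eprod N H \<epsilon> (L0 M)"
    have XE: "?X * 1\<^sub>m N * ?E = ?X * ?E" using right_mult_one_mat[OF X] by simp
    show "?X * 1\<^sub>m N * ?E = 0\<^sub>m N N"
    proof (cases "?E = 0\<^sub>m N N")
      case True
      then show ?thesis unfolding XE using right_mult_zero_mat[OF X] by simp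
    next
      case False
      have A: "x \<in> carrier_mat N N \<and> (\<exists>c. x * ?E = c \<cdot>\<^sub>m ?E)" if "x \<in> P_algebra M N H" for x
        by (rule alg_eigen[OF ph comm L0_set that])
      obtain \<chi> where ch: "character N (P_algebra M N H) \<chi>" and ev: "\<forall>x\<in>P_algebra M N H. x * ?E = \<chi> x \<cdot>\<^sub>m ?E"
        using make_char[OF Eprod_carrier False A] by blast
      obtain \<sigma> where s: "\<sigma> \<in> char_pperms M N H" and iff: "\<forall>i<M. \<forall>j<M. \<sigma> j = Some i \<longleftrightarrow> \<chi> (Pmat N H i j) = 1"
        using sigma_of_char[OF ph ch] by blast
      have sG: "\<sigma> \<in> ?G" using s by (rule gen_semigroup.base)
      note e = eval_char[OF ph ch iff f]
      have "qmap ?G f \<sigma> = 0" using q by simp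
      then have "\<chi> ?X = 0" using e(2) sG by (simp add: qmap_EvG)
      then have "?X * ?E = 0\<^sub>m N N" using ev e(1) zero_smult_mat'[OF Eprod_carrier] by simp
      then show ?thesis unfolding XE .
    qed
  qed
  then show ?thesis using right_mult_one_mat[OF X] by simp
qed

lemma fs_zero: "fs (\<lambda>_. 0)" by (simp add: fs_def)
lemma EvG_zero: "EvG \<phi> (\<lambda>_. 0) = 0" by (simp add: EvG_def)

lemma EvG_tensor: assumes "fs a" "fs b"
  shows "fs (ftensor a b)" "EvG (\<lambda>p. \<phi> (fst p) * \<psi> (snd p)) (ftensor a b) = EvG \<phi> a * EvG \<psi> b"
proof -
  let ?A = "{x. a x \<noteq> 0} \<times> {x. b x \<noteq> 0}"
  have fA: "finite ?A" using assms by (simp add: fs_def)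
  have sub: "{p. ftensor a b p \<noteq> 0} \<subseteq> ?A" by (auto simp: ftensor_def)
  show fs: "fs (ftensor a b)" unfolding fs_def using finite_subset[OF sub fA] .
  have "EvG (\<lambda>p. \<phi> (fst p) * \<psi> (snd p)) (ftensor a b) = (\<Sum>p\<in>?A. ftensor a b p * (\<phi> (fst p) * \<psi> (snd p)))"
    by (rule EvG_sup[OF fs fA sub])
  also have "\<dots> = (\<Sum>p\<in>?A. (a (fst p) * \<phi> (fst p)) * (b (snd p) * \<psi> (snd p)))"
    by (rule sum.cong) (auto simp: ftensor_def)
  also have "\<dots> = EvG \<phi> a * EvG \<psi> b"
    unfolding EvG_def sum_product by (simp add: sum.cartesian_product case_prod_beta)
  finally show "EvG (\<lambda>p. \<phi> (fst p) * \<psi> (snd p)) (ftensor a b) = EvG \<phi> a * EvG \<psi> b" .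
qed

lemma cspan_EvG: assumes "t \<in> cspan X" and "\<And>x. x \<in> X \<Longrightarrow> fs x \<and> EvG \<Phi> x = 0"
  shows "fs t \<and> EvG \<Phi> t = 0"
  using assms(1)
proof (induction rule: cspan.induct)
  case zero then show ?case by (simp add: fs_zero EvG_zero)
next
  case (base x) then show ?case using assms(2) by blast
next
  case (add x y) then show ?case by (simp add: fs_add EvG_add)
next
  case (scale x c) then show ?case by (simp add: fs_scale EvG_scale)
qed

lemma minimal: assumes ph: "partial_hadamard M N H" and I: "factorization_ideal M N H I"
  shows "\<forall>f\<in>I. qmap (gen_semigroup (char_pperms M N H)) f = (\<lambda>_. 0)"
proof -
  let ?G = "gen_semigroup (char_pperms M N H)"
  have Ifree: "I \<subseteq> free_alg M" and Ipi: "\<forall>f\<in>I. piH N H f = 0\<^sub>m N N"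
    and Icomul: "\<forall>f\<in>I. fcomul M f \<in> cspan ({ftensor a b | a b. a \<in> I \<and> b \<in> free_alg M} \<union>
               {ftensor a b | a b. a \<in> free_alg M \<and> b \<in> I})"
    using I unfolding factorization_ideal_def by blast+
  have main: "\<forall>f\<in>I. EvG (ev_word \<sigma>) f = 0" if "\<sigma> \<in> ?G" for \<sigma>
    using that
  proof (induction rule: gen_semigroup.induct)
    case (base \<sigma>)
    then obtain \<chi> where ch: "character N (P_algebra M N H) \<chi>"
      and iff: "\<forall>i<M. \<forall>j<M. \<sigma> j = Some i \<longleftrightarrow> \<chi> (Pmat N H i j) = 1"
      unfolding char_pperms_def mem_Collect_eq by (elim conjE exE) blast
    show ?case
    proof
      fix f assume fI: "f \<in> I"
      then have ff: "f \<in> free_alg M" using Ifree by blast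
      have "EvG (ev_word \<sigma>) f = \<chi> (piH N H f)" using eval_char(2)[OF ph ch iff ff] by simp
      also have "\<dots> = 0" using Ipi fI char_zero[OF ch] by simp
      finally show "EvG (ev_word \<sigma>) f = 0" .
    qed
  next
    case (comp \<sigma> \<tau>)
    have gt: "good M \<tau>" by (rule G_good[OF ph comp.hyps(2)])
    then have ran: "\<And>j k. \<tau> j = Some k \<Longrightarrow> k < M" unfolding good_def by blast
    show ?case
    proof
      fix f assume fI: "f \<in> I"
      then have ff: "fs f" using Ifree free_alg_fs by blast
      let ?\<Phi> = "\<lambda>p. ev_word \<sigma> (fst p) * ev_word \<tau> (snd p)"
      have "fs (fcomul M f) \<and> EvG ?\<Phi> (fcomul M f) = 0"
      proof (rule cspan_EvG)
        show "fcomul M f \<in> cspan ({ftensor a b | a b. a \<in> I \<and> b \<in> free_alg M} \<union>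
               {ftensor a b | a b. a \<in> free_alg M \<and> b \<in> I})" using Icomul fI by blast
        fix x assume "x \<in> {ftensor a b | a b. a \<in> I \<and> b \<in> free_alg M} \<union>
               {ftensor a b | a b. a \<in> free_alg M \<and> b \<in> I}"
        then obtain a b where x: "x = ftensor a b" and ab: "(a \<in> I \<and> b \<in> free_alg M) \<or> (a \<in> free_alg M \<and> b \<in> I)"
          by blast
        have fab: "fs a" "fs b" using ab Ifree free_alg_fs by blast+
        have z: "EvG (ev_word \<sigma>) a * EvG (ev_word \<tau>) b = 0" using ab comp.IH by auto
        show "fs x \<and> EvG ?\<Phi> x = 0" unfolding x using EvG_tensor(1)[OF fab] EvG_tensor(2)[OF fab, of "ev_word \<sigma>" "ev_word \<tau>"] z by simp
      qed
      then show "EvG (ev_word (\<sigma> \<circ>\<^sub>m \<tau>)) f = 0" using comul_EvG(2)[OF ff ran] by simp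
    qed
  qed
  show ?thesis
  proof
    fix f assume "f \<in> I"
    show "qmap ?G f = (\<lambda>_. 0)"
    proof
      fix \<sigma> show "qmap ?G f \<sigma> = 0" using main \<open>f \<in> I\<close> by (simp add: qmap_EvG)
    qed
  qed
qed


definition Fac :: "(nat \<Rightarrow> nat option) \<Rightarrow> nat \<times> nat \<Rightarrow> felem" where
  "Fac \<sigma>0 p = (if \<sigma>0 (snd p) = Some (fst p) then fgen (fst p) (snd p)
     else fadd fone (fscale (-1) (fgen (fst p) (snd p))))"

definition Find :: "(nat \<Rightarrow> nat option) \<Rightarrow> (nat \<times> nat) list \<Rightarrow> felem" where
  "Find \<sigma>0 L = foldr (\<lambda>p acc. fmul (Fac \<sigma>0 p) acc) L fone"

lemma Fac_props: assumes "fst p < M" "snd p < M"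
  shows "Fac \<sigma>0 p \<in> free_alg M"
    "EvG (ev_word \<sigma>) (Fac \<sigma>0 p) = (if (\<sigma>0 (snd p) = Some (fst p) \<longleftrightarrow> \<sigma> (snd p) = Some (fst p)) then 1 else 0)"
proof -
  have g: "fgen (fst p) (snd p) \<in> free_alg M" using fgen_free assms by blast
  show "Fac \<sigma>0 p \<in> free_alg M" unfolding Fac_def using g
    by (simp add: fadd_free fscale_free fone_free)
  show "EvG (ev_word \<sigma>) (Fac \<sigma>0 p) = (if (\<sigma>0 (snd p) = Some (fst p) \<longleftrightarrow> \<sigma> (snd p) = Some (fst p)) then 1 else 0)"
    unfolding Fac_def
    by (simp add: EvG_fgen ev_single' EvG_fadd EvG_fscale fs_fone fs_fgen fs_fscale EvG_fone)
qed

lemma Find_props: "set L \<subseteq> {..<M} \<times> {..<M} \<Longrightarrow> Find \<sigma>0 L \<in> free_alg M \<and>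
   EvG (ev_word \<sigma>) (Find \<sigma>0 L) = (if (\<forall>p\<in>set L. (\<sigma>0 (snd p) = Some (fst p) \<longleftrightarrow> \<sigma> (snd p) = Some (fst p))) then 1 else 0)"
proof (induction L)
  case Nil
  then show ?case by (simp add: Find_def fone_free EvG_fone)
next
  case (Cons p L)
  have p: "fst p < M" "snd p < M" using Cons.prems by auto
  have IH: "Find \<sigma>0 L \<in> free_alg M"
    "EvG (ev_word \<sigma>) (Find \<sigma>0 L) = (if (\<forall>p\<in>set L. (\<sigma>0 (snd p) = Some (fst p) \<longleftrightarrow> \<sigma> (snd p) = Some (fst p))) then 1 else 0)"
    using Cons by auto
  have eq: "Find \<sigma>0 (p # L) = fmul (Fac \<sigma>0 p) (Find \<sigma>0 L)" by (simp add: Find_def)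
  note F = Fac_props[OF p]
  have "EvG (ev_word \<sigma>) (Find \<sigma>0 (p # L)) = EvG (ev_word \<sigma>) (Fac \<sigma>0 p) * EvG (ev_word \<sigma>) (Find \<sigma>0 L)"
    unfolding eq by (rule EvG_mul[OF free_alg_fs[OF F(1)] free_alg_fs[OF IH(1)] ev_append])
  then show ?case unfolding eq using fmul_free[OF F(1) IH(1)] F(2) IH(2) by simp
qed

lemma agree: assumes "good M \<sigma>" "good M \<sigma>0"
  and a: "\<forall>p\<in>set (L0 M). (\<sigma>0 (snd p) = Some (fst p) \<longleftrightarrow> \<sigma> (snd p) = Some (fst p))"
  shows "\<sigma> = \<sigma>0"
proof
  fix j
  have b: "\<And>i. \<sigma> j = Some i \<Longrightarrow> j < M \<and> i < M" "\<And>i. \<sigma>0 j = Some i \<Longrightarrow> j < M \<and> i < M"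
    using assms(1,2) unfolding good_def by blast+
  show "\<sigma> j = \<sigma>0 j"
  proof (cases "\<sigma>0 j")
    case None
    show ?thesis
    proof (cases "\<sigma> j")
      case (Some i)
      then have "(i,j) \<in> set (L0 M)" using b(1) by auto
      then show ?thesis using a Some None by fastforce
    qed (simp add: None)
  next
    case (Some i)
    then have "(i,j) \<in> set (L0 M)" using b(2) by auto
    then show ?thesis using a Some by fastforce
  qed
qed

lemma sum_felem: "finite B \<Longrightarrow> (\<forall>x\<in>B. h x \<in> free_alg M) \<Longrightarrow>
  (\<lambda>w. \<Sum>x\<in>B. h x w) \<in> free_alg M \<and> EvG \<phi> (\<lambda>w. \<Sum>x\<in>B. h x w) = (\<Sum>x\<in>B. EvG \<phi> (h x))"
proof (induction B rule: finite_induct)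
  case empty
  then show ?case by (simp add: free_alg_def EvG_zero)
next
  case (insert x B)
  have e: "(\<lambda>w. \<Sum>x\<in>insert x B. h x w) = fadd (h x) (\<lambda>w. \<Sum>x\<in>B. h x w)" using insert.hyps by (simp add: fadd_def)
  have hx: "h x \<in> free_alg M" and IH: "(\<lambda>w. \<Sum>x\<in>B. h x w) \<in> free_alg M" "EvG \<phi> (\<lambda>w. \<Sum>x\<in>B. h x w) = (\<Sum>x\<in>B. EvG \<phi> (h x))"
    using insert by auto
  show ?case unfolding e using fadd_free[OF hx IH(1)] EvG_fadd[OF free_alg_fs[OF hx] free_alg_fs[OF IH(1)]] IH(2) insert.hyps
    by simp
qed

lemma surj: assumes ph: "partial_hadamard M N H"
  shows "\<forall>g. (\<forall>\<sigma>. \<sigma> \<notin> gen_semigroup (char_pperms M N H) \<longrightarrow> g \<sigma> = 0) \<longrightarrow>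
     (\<exists>f\<in>free_alg M. qmap (gen_semigroup (char_pperms M N H)) f = g)"
proof (intro allI impI)
  let ?G = "gen_semigroup (char_pperms M N H)"
  fix g :: "(nat \<Rightarrow> nat option) \<Rightarrow> complex" assume g: "\<forall>\<sigma>. \<sigma> \<notin> ?G \<longrightarrow> g \<sigma> = 0"
  have finG: "finite ?G" by (rule finite_subset[OF _ finite_good[of M]]) (use G_good[OF ph] in blast)
  define h where "h = (\<lambda>\<sigma>0. fscale (g \<sigma>0) (Find \<sigma>0 (L0 M)))"
  have Ls: "set (L0 M) \<subseteq> {..<M} \<times> {..<M}" by auto
  have hf: "\<forall>x\<in>?G. h x \<in> free_alg M" unfolding h_def using Find_props[OF Ls] fscale_free by blast
  note S = sum_felem[OF finG hf]
  have "qmap ?G (\<lambda>w. \<Sum>x\<in>?G. h x w) = g"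
  proof
    fix \<sigma>
    show "qmap ?G (\<lambda>w. \<Sum>x\<in>?G. h x w) \<sigma> = g \<sigma>"
    proof (cases "\<sigma> \<in> ?G")
      case False then show ?thesis using g by (simp add: qmap_EvG)
    next
      case True
      have "EvG (ev_word \<sigma>) (\<lambda>w. \<Sum>x\<in>?G. h x w) = (\<Sum>\<sigma>0\<in>?G. EvG (ev_word \<sigma>) (h \<sigma>0))" using S by blast
      also have "\<dots> = (\<Sum>\<sigma>0\<in>?G. if \<sigma>0 = \<sigma> then g \<sigma>0 else 0)"
      proof (rule sum.cong[OF refl])
        fix \<sigma>0 assume s0: "\<sigma>0 \<in> ?G"
        have F: "Find \<sigma>0 (L0 M) \<in> free_alg M" using Find_props[OF Ls] by blast
        have "EvG (ev_word \<sigma>) (Find \<sigma>0 (L0 M)) = (if \<sigma>0 = \<sigma> then 1 else 0)"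
          using Find_props[OF Ls, of \<sigma>0 \<sigma>] agree[OF G_good[OF ph True] G_good[OF ph s0]] by auto
        then show "EvG (ev_word \<sigma>) (h \<sigma>0) = (if \<sigma>0 = \<sigma> then g \<sigma>0 else 0)"
          unfolding h_def using EvG_fscale[OF free_alg_fs[OF F]] by simp
      qed
      also have "\<dots> = g \<sigma>" using True finG by (simp add: sum.delta')
      finally show ?thesis using True by (simp add: qmap_EvG)
    qed
  qed
  then show "\<exists>f\<in>free_alg M. qmap ?G f = g" using S by blast
qed


lemma submagic_zero: assumes ph: "partial_hadamard M N H" and r: "r \<in> submagic_rels M"
  shows "qmap (gen_semigroup (char_pperms M N H)) r = (\<lambda>_. 0)"
proof
  let ?G = "gen_semigroup (char_pperms M N H)"
  fix \<sigma>
  show "qmap ?G r \<sigma> = 0"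
  proof (cases "\<sigma> \<in> ?G")
    case False then show ?thesis by (simp add: qmap_EvG)
  next
    case True
    have gd: "good M \<sigma>" by (rule G_good[OF ph True])
    have mul: "EvG (ev_word \<sigma>) (fmul (fgen a b) (fgen c d)) = ev_word \<sigma> [(a,b)] * ev_word \<sigma> [(c,d)]" for a b c d
      using EvG_mul[OF fs_fgen fs_fgen ev_append[of \<sigma>]] by (simp add: EvG_fgen)
    have "EvG (ev_word \<sigma>) r = 0"
      using r unfolding submagic_rels_def
    proof (elim UnE CollectE exE conjE)
      fix i j assume "r = fadd (fmul (fgen i j) (fgen i j)) (fscale (-1) (fgen i j))"
      then show ?thesis
        by (simp add: EvG_fadd fs_fmul fs_fgen fs_fscale EvG_fscale EvG_fgen mul ev_single)
    next
      fix i j k assume r: "r = fmul (fgen i j) (fgen i k)" and jk: "j \<noteq> k"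
      have "\<not> (\<sigma> j = Some i \<and> \<sigma> k = Some i)" using gd jk unfolding good_def by blast
      then show ?thesis unfolding r mul ev_single by auto
    next
      fix i j k assume r: "r = fmul (fgen i j) (fgen k j)" and ik: "i \<noteq> k"
      have "\<not> (\<sigma> j = Some i \<and> \<sigma> j = Some k)" using ik by auto
      then show ?thesis unfolding r mul ev_single by auto
    qed
    then show ?thesis using True by (simp add: qmap_EvG)
  qed
qed

theorem proposition2p3:
  fixes M N :: nat and H :: "nat \<Rightarrow> nat \<Rightarrow> complex"
  assumes "partial_hadamard M N H"
    and "\<forall>i<M. \<forall>j<M. \<forall>k<M. \<forall>l<M. Pmat N H i j * Pmat N H k l = Pmat N H k l * Pmat N H i j"
  shows "is_bialgebra_image M N H (gen_semigroup (char_pperms M N H))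
         \<and> (\<forall>i<M. \<forall>j<M. qmap (gen_semigroup (char_pperms M N H)) (fgen i j)
               = (\<lambda>\<sigma>. if \<sigma> \<in> gen_semigroup (char_pperms M N H)
                        then (if \<sigma> j = Some i then 1 else 0) else 0))"
proof -
  note ph = assms(1) and comm = assms(2)
  let ?G = "gen_semigroup (char_pperms M N H)"
  have c1: "\<forall>\<sigma>\<in>?G. \<forall>\<tau>\<in>?G. (\<sigma> \<circ>\<^sub>m \<tau>) \<in> ?G" by (blast intro: gen_semigroup.comp)
  have c2: "qmap ?G fone = (\<lambda>\<sigma>. if \<sigma> \<in> ?G then 1 else 0)" by (rule ext) (simp add: qmap_EvG EvG_fone)
  have c3: "\<forall>f\<in>free_alg M. \<forall>g\<in>free_alg M. qmap ?G (fadd f g) = (\<lambda>\<sigma>. qmap ?G f \<sigma> + qmap ?G g \<sigma>)"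
    by (intro ballI ext) (simp add: qmap_EvG EvG_fadd free_alg_fs)
  have c4: "\<forall>f\<in>free_alg M. \<forall>c. qmap ?G (fscale c f) = (\<lambda>\<sigma>. c * qmap ?G f \<sigma>)"
    by (intro ballI allI ext) (simp add: qmap_EvG EvG_fscale free_alg_fs)
  have c5: "\<forall>f\<in>free_alg M. \<forall>g\<in>free_alg M. qmap ?G (fmul f g) = (\<lambda>\<sigma>. qmap ?G f \<sigma> * qmap ?G g \<sigma>)"
    by (intro ballI ext) (simp add: qmap_EvG EvG_mul[OF _ _ ev_append] free_alg_fs)
  have c6: "\<forall>f\<in>free_alg M. qmap ?G (fstar f) = (\<lambda>\<sigma>. cnj (qmap ?G f \<sigma>))"
  proof (intro ballI ext)
    fix f \<sigma> assume f: "f \<in> free_alg M"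
    show "qmap ?G (fstar f) \<sigma> = cnj (qmap ?G f \<sigma>)"
      by (simp add: qmap_EvG EvG_fstar[where \<phi>="ev_word \<sigma>", OF free_alg_fs[OF f] ev_rev ev_cnj])
  qed
  have c7: "\<forall>r\<in>submagic_rels M. qmap ?G r = (\<lambda>_. 0)" using submagic_zero[OF ph] by blast
  have c8: "\<forall>g. (\<forall>\<sigma>. \<sigma> \<notin> ?G \<longrightarrow> g \<sigma> = 0) \<longrightarrow> (\<exists>f\<in>free_alg M. qmap ?G f = g)" by (rule surj[OF ph])
  have c9: "\<forall>f\<in>free_alg M. \<forall>\<sigma>\<in>?G. \<forall>\<tau>\<in>?G. qqmap ?G (fcomul M f) \<sigma> \<tau> = qmap ?G f (\<sigma> \<circ>\<^sub>m \<tau>)"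
  proof (intro ballI)
    fix f \<sigma> \<tau> assume f: "f \<in> free_alg M" and s: "\<sigma> \<in> ?G" and t: "\<tau> \<in> ?G"
    have ran: "\<And>j k. \<tau> j = Some k \<Longrightarrow> k < M" using G_good[OF ph t] unfolding good_def by blast
    have st: "\<sigma> \<circ>\<^sub>m \<tau> \<in> ?G" using s t by (rule gen_semigroup.comp)
    show "qqmap ?G (fcomul M f) \<sigma> \<tau> = qmap ?G f (\<sigma> \<circ>\<^sub>m \<tau>)"
      using s t st comul_EvG(2)[OF free_alg_fs[OF f] ran] by (simp add: qqmap_EvG qmap_EvG)
  qed
  have c10: "\<forall>f\<in>free_alg M. qmap ?G f = (\<lambda>_. 0) \<longrightarrow> piH N H f = 0\<^sub>m N N"
    using factor[OF ph comm] by blast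
  have c11: "\<forall>I. factorization_ideal M N H I \<longrightarrow> (\<forall>f\<in>I. qmap ?G f = (\<lambda>_. 0))"
    using minimal[OF ph] by blast
  have c12: "\<forall>i<M. \<forall>j<M. qmap ?G (fgen i j) = (\<lambda>\<sigma>. if \<sigma> \<in> ?G then (if \<sigma> j = Some i then 1 else 0) else 0)"
    by (intro allI impI ext) (simp add: qmap_EvG EvG_fgen ev_single)
  show ?thesis unfolding is_bialgebra_image_def
    using c1 c2 c3 c4 c5 c6 c7 c8 c9 c10 c11 c12 by blast
qed

end
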